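(* Let $(\mathcal X,\mathcal B,\pi)$ be a measure space with $\pi$ $\sigma$-finite, $r:\mathcal X\to\mathbb R$ measurable, and $\{\varepsilon(x):x\in\mathcal X\}$ an arbitrary real-valued random field with i.i.d. copies $\varepsilon_1,\varepsilon_2,\dots$ independent of all sampled points. Assume: (a) $p_0\in\mathcal P_\pi$ (and a reference density $p_{\rm ref}\in\mathcal P_\pi$) satisfy $\int p|\log p|\,d\pi<\infty$; (b) for every $p\in\mathcal P_\pi$, $\mathbb E_{X\sim p}\bigl[e^{|r(X)+\varepsilon(X)|}\bigr]<\infty$ (with $X$ independent of $\varepsilon$); (c) $0<Q_*<\infty$ and $Q(x)\le Q_*$ for all $x$. Define recursively, for $t\in\mathbb N$, $p_{t+1}$ as a maximizer over $p\in\mathcal P_\pi$ of $$p\longmapsto \mathbb E_{X\sim p_t}\bigl[\log p(X)\,H^\infty_{p_t}(X)\bigr].$$ Then for every $t\in\mathbb N$ this functional has a unique maximizer over $p\in\mathcal P_\pi$, namely $p_{t+1}(x)=p_t(x)\,H^\infty_{p_t}(x)$, $x\in\mathcal X$.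
   Context: $\mathcal P_\pi$ is the set of probability measures on $(\mathcal X,\mathcal B)$ absolutely continuous w.r.t. $\pi$, identified with their densities. $Q(x):=e^{r(x)}\,\mathbb E[e^{\varepsilon(X)}\mid X=x]$ for $X$ independent of the noise field (i.e. $e^{r(x)}\mathbb E[e^{\varepsilon(x)}]$), and $Q_*:=\operatorname*{ess\,sup}_{x\in\mathcal X}Q(x)$ w.r.t. $\pi$. For an integer $K\ge2$ the choice kernel is $H^K_p(x):=\mathbb E\bigl[K e^{r(x)+\varepsilon(x)}/(e^{r(x)+\varepsilon(x)}+\sum_{k=1}^{K-1}e^{r(X_k)+\varepsilon_k(X_k)})\bigr]$ with $X_1,\dots,X_{K-1}$ i.i.d. with density $p$, independent of the i.i.d. noise copies $\varepsilon,\varepsilon_1,\dots$; and $H^\infty_p(x):=\lim_{K\to\infty}H^K_p(x)$. Under assumption (b) this limit exists and equals $Q(x)/\mathbb E_{X\sim p}Q(X)$. *)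

theory Defs
  imports "HOL-Probability.Probability"
begin

definition dens :: "'a measure \<Rightarrow> ('a \<Rightarrow> real) set" where
  "dens M = {p \<in> borel_measurable M. (\<forall>x\<in>space M. 0 \<le> p x) \<and> (\<integral>\<^sup>+x. ennreal (p x) \<partial>M) = 1}"

definition Qf :: "'w measure \<Rightarrow> ('a \<Rightarrow> real) \<Rightarrow> ('w \<Rightarrow> 'a \<Rightarrow> real) \<Rightarrow> 'a \<Rightarrow> ennreal" where
  "Qf N r eps x = ennreal (exp (r x)) * (\<integral>\<^sup>+w. ennreal (exp (eps w x)) \<partial>N)"

text \<open>Choice kernel H^K_p(x): noise copies indexed by {0..<K} (copy 0 is the one attached to x),
  sampled points X_1..X_{K-1} i.i.d. with density p, all independent (product measure).\<close>
definition HK :: "'a measure \<Rightarrow> 'w measure \<Rightarrow> ('a \<Rightarrow> real) \<Rightarrow> ('w \<Rightarrow> 'a \<Rightarrow> real)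
    \<Rightarrow> nat \<Rightarrow> ('a \<Rightarrow> real) \<Rightarrow> 'a \<Rightarrow> real" where
  "HK M N r eps K p x =
     (\<integral>z. (case z of (\<omega>, xs) \<Rightarrow>
            real K * exp (r x + eps (\<omega> 0) x) /
            (exp (r x + eps (\<omega> 0) x) + (\<Sum>k\<in>{1..<K}. exp (r (xs k) + eps (\<omega> k) (xs k)))))
       \<partial>(PiM {0..<K} (\<lambda>_. N) \<Otimes>\<^sub>M PiM {1..<K} (\<lambda>_. density M p)))"

definition Hinf :: "'a measure \<Rightarrow> 'w measure \<Rightarrow> ('a \<Rightarrow> real) \<Rightarrow> ('w \<Rightarrow> 'a \<Rightarrow> real)
    \<Rightarrow> ('a \<Rightarrow> real) \<Rightarrow> 'a \<Rightarrow> real" where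
  "Hinf M N r eps p x = lim (\<lambda>K. HK M N r eps K p x)"

text \<open>The objective  E_{X ~ p_t}[log p(X) H(X)] = integral of q(x) log p(x) d pi  with
  q = p_t * H, as an extended real: positive part minus negative part, with the conventions
  log 0 = -infinity and 0 * (-infinity) = 0.\<close>
definition obj :: "'a measure \<Rightarrow> ('a \<Rightarrow> real) \<Rightarrow> ('a \<Rightarrow> real) \<Rightarrow> ereal" where
  "obj M q p =
     enn2ereal (\<integral>\<^sup>+x. (if p x \<le> 0 then 0 else ennreal (q x * max 0 (ln (p x)))) \<partial>M)
   - enn2ereal (\<integral>\<^sup>+x. (if q x = 0 then 0 else if p x \<le> 0 then \<infinity>
                        else ennreal (q x * max 0 (- ln (p x)))) \<partial>M)"

definition unique_maximizer :: "'a measure \<Rightarrow> (('a \<Rightarrow> real) \<Rightarrow> ereal) \<Rightarrow> ('a \<Rightarrow> real) \<Rightarrow> bool" where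
  "unique_maximizer M F p \<longleftrightarrow>
     p \<in> dens M \<and> (\<forall>p'\<in>dens M. F p' \<le> F p) \<and>
     (\<forall>p'\<in>dens M. F p' = F p \<longrightarrow> (AE x in M. p' x = p x))"

primrec iter :: "'a measure \<Rightarrow> 'w measure \<Rightarrow> ('a \<Rightarrow> real) \<Rightarrow> ('w \<Rightarrow> 'a \<Rightarrow> real)
    \<Rightarrow> ('a \<Rightarrow> real) \<Rightarrow> nat \<Rightarrow> 'a \<Rightarrow> real" where
  "iter M N r eps p0 0 = p0"
| "iter M N r eps p0 (Suc t) = (\<lambda>x. iter M N r eps p0 t x * Hinf M N r eps (iter M N r eps p0 t) x)"

end

theory Submission
  imports Defs
begin

lemma lim_ratio:
  fixes m c q :: real assumes m: "m > 0"
  shows "(\<lambda>K::nat. real K * q / (c + (real K - 1) * m)) \<longlonglongrightarrow> q / m"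
proof -
  have "(\<lambda>K::nat. q / (c * inverse (real K) + m - m * inverse (real K))) \<longlonglongrightarrow> q / (c * 0 + m - m * 0)"
    by (intro tendsto_intros lim_inverse_n) (use m in auto)
  then have *: "(\<lambda>K::nat. q / (c * inverse (real K) + m - m * inverse (real K))) \<longlonglongrightarrow> q / m" by simp
  show ?thesis
  proof (rule Lim_transform_eventually[OF *])
    show "\<forall>\<^sub>F K in sequentially. q / (c * inverse (real K) + m - m * inverse (real K)) = real K * q / (c + (real K - 1) * m)"
      using eventually_ge_at_top[of "1::nat"]
    proof (rule eventually_mono)
      fix K :: nat assume "1 \<le> K"
      then have K: "real K > 0" by simp
      have "c * inverse (real K) + m - m * inverse (real K) = (c + (real K - 1) * m) / real K"
        using K by (simp add: field_simps)
      then show "q / (c * inverse (real K) + m - m * inverse (real K)) = real K * q / (c + (real K - 1) * m)"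
        by simp
    qed
  qed
qed

lemma lim_kexp:
  fixes b :: real assumes b: "b > 0"
  shows "(\<lambda>K::nat. real K * exp (-(real K - 1) * b)) \<longlonglongrightarrow> 0"
proof -
  have f0: "filterlim (\<lambda>K::nat. b * real K) at_top sequentially"
    by (rule filterlim_tendsto_pos_mult_at_top[OF tendsto_const b filterlim_real_sequentially])
  have f: "filterlim (\<lambda>K::nat. real K * b) at_top sequentially"
    using f0 by (simp add: mult.commute)
  have "((\<lambda>x::real. x ^ 1 / exp x) \<longlongrightarrow> 0) at_top" by (rule tendsto_power_div_exp_0)
  from filterlim_compose[OF this f]
  have "(\<lambda>K::nat. (real K * b) ^ 1 / exp (real K * b)) \<longlonglongrightarrow> 0" by simp
  then have "(\<lambda>K::nat. exp b / b * ((real K * b) ^ 1 / exp (real K * b))) \<longlonglongrightarrow> exp b / b * 0"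
    by (intro tendsto_intros)
  moreover have "exp b / b * ((real K * b) ^ 1 / exp (real K * b)) = real K * exp (-(real K - 1) * b)" for K :: nat
    using b by (simp add: field_simps exp_diff exp_minus left_diff_distrib)
  ultimately show ?thesis by simp
qed
lemma exp_neg_quad:
  fixes t :: real assumes t: "0 \<le> t"
  shows "exp (- t) + t \<le> 1 + t^2"
proof -
  have "1 + t/2 \<le> exp (t/2)" by simp
  then have "(1 + t/2)^2 \<le> exp (t/2) ^ 2" using t by (intro power_mono) auto
  also have "exp (t/2) ^ 2 = exp t" by (simp add: exp_double[symmetric] power2_eq_square exp_add[symmetric])
  finally have e: "1 + t + t^2/4 \<le> exp t" by (simp add: power2_eq_square field_simps)
  have pos: "0 < 1 + t + t^2/4" using t by (simp add: add_pos_nonneg)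
  have "exp (- t) = 1 / exp t" by (simp add: exp_minus inverse_eq_divide)
  also have "\<dots> \<le> 1 / (1 + t + t^2/4)" using e pos by (intro divide_left_mono) auto
  also have "\<dots> \<le> 1 - t + t^2"
  proof -
    have eq: "(1 + t + t^2/4) * (1 - t + t^2) = 1 + t^2/4 + 3*t^3/4 + t^4/4"
      by (simp add: eval_nat_numeral field_simps)
    have "0 \<le> t^2/4 + 3*t^3/4 + t^4/4" using t by simp
    then have "1 \<le> (1 + t + t^2/4) * (1 - t + t^2)" unfolding eq by linarith
    then show ?thesis using pos by (simp add: divide_le_eq mult.commute)
  qed
  finally show ?thesis by simp
qed

lemma exp_min_bound:
  fixes y l c :: real assumes y: "0 < y" and l: "0 \<le> l" and c: "0 < c"
  shows "exp (- l * y) + l * min y c \<le> 1 + l^2 * c^2"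
proof -
  have t: "0 \<le> l * min y c" using l y c by simp
  have "exp (- l * y) \<le> exp (- (l * min y c))" using l by (simp add: mult_left_mono)
  then have e: "exp (- (l * y)) \<le> exp (- (l * min y c))" by simp
  moreover have "exp (- (l * min y c)) + l * min y c \<le> 1 + (l * min y c)^2" by (rule exp_neg_quad[OF t])
  moreover have "(l * min y c)^2 \<le> (l * c)^2" using t l c by (intro power_mono) (auto simp: mult_left_mono)
  ultimately show ?thesis unfolding power_mult_distrib mult_minus_left by linarith
qed


lemma gibbs_R1:
  fixes p q :: real assumes q: "0 < q" and p: "0 < p"
  shows "q * max 0 (ln p) \<le> q * max 0 (ln q) + p"
proof (cases "p \<le> q")
  case True
  then have "ln p \<le> ln q" using p q by simp
  then have "q * max 0 (ln p) \<le> q * max 0 (ln q)" using q by (intro mult_left_mono) auto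
  then show ?thesis using p by simp
next
  case False
  have "ln (p / q) \<le> p / q - 1" using p q by (intro ln_le_minus_one) simp
  then have lpq: "ln p - ln q \<le> p / q - 1" using p q by (simp add: ln_div)
  have "max 0 (ln p) \<le> max 0 (ln q) + (ln p - ln q)"
    using False p q by (auto simp: max_def)
  then have "q * max 0 (ln p) \<le> q * (max 0 (ln q) + (ln p - ln q))" using q by (intro mult_left_mono) auto
  also have "\<dots> \<le> q * (max 0 (ln q) + (p / q - 1))" using q lpq by (intro mult_left_mono) auto
  also have "\<dots> = q * max 0 (ln q) + p - q" using q by (simp add: field_simps)
  finally show ?thesis using q by simp
qed

lemma gibbs_R2:
  fixes p q :: real assumes q: "0 < q" and p: "0 < p"
  shows "0 \<le> q * ln q - q * ln p + p - q" and "q * ln q - q * ln p + p - q = 0 \<Longrightarrow> p = q"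
proof -
  have e: "q * ln q - q * ln p + p - q = q * ((p / q - 1) - ln (p / q))"
    using p q by (simp add: ln_div field_simps)
  have "ln (p / q) \<le> p / q - 1" using p q by (intro ln_le_minus_one) simp
  then show "0 \<le> q * ln q - q * ln p + p - q" unfolding e using q by simp
  assume "q * ln q - q * ln p + p - q = 0"
  then have "ln (p / q) = p / q - 1" unfolding e using q by simp
  then have "p / q = 1" using p q by (intro ln_eq_minus_one) auto
  then show "p = q" using q by simp
qed

lemma gibbs_R3:
  fixes p q :: real
  shows "q * max 0 (ln p) + q * max 0 (- ln q) + q + (q * ln q - q * ln p + p - q) = q * max 0 (ln q) + q * max 0 (- ln p) + p"
proof -
  have a: "max 0 (ln p) - max 0 (- ln p) = ln p" "max 0 (ln q) - max 0 (- ln q) = ln q" by (auto simp: max_def)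
  have "q * max 0 (ln p) - q * max 0 (- ln p) = q * ln p" using a(1) by (metis right_diff_distrib)
  moreover have "q * max 0 (ln q) - q * max 0 (- ln q) = q * ln q" using a(2) by (metis right_diff_distrib)
  ultimately show ?thesis by linarith
qed

lemma xlnx_bound:
  fixes Q Qs :: real assumes Q: "0 < Q" "Q \<le> Qs"
  shows "Q * \<bar>ln Q\<bar> \<le> 1 + Qs^2"
proof (cases "Q \<le> 1")
  case True
  then have "ln Q \<le> 0" using Q by simp
  moreover have "1 - 1 / Q \<le> ln Q" using ln_le_minus_one[of "1 / Q"] Q by (simp add: ln_div)
  ultimately have "Q * \<bar>ln Q\<bar> \<le> Q * (1 / Q - 1)" using Q by (intro mult_left_mono) auto
  also have "\<dots> = 1 - Q" using Q by (simp add: field_simps)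
  also have "\<dots> \<le> 1 + Qs^2" using Q by (smt (verit) zero_le_power2)
  finally show ?thesis .
next
  case False
  then have "0 \<le> ln Q" by simp
  moreover have "ln Q \<le> Q - 1" using ln_le_minus_one Q by simp
  ultimately have "Q * \<bar>ln Q\<bar> \<le> Q * Q" using Q by (intro mult_left_mono) auto
  also have "\<dots> \<le> Qs * Qs" using Q by (intro mult_mono) auto
  finally show ?thesis by (simp add: power2_eq_square)
qed

lemma ent_step:
  fixes p Q Qs c :: real assumes p: "0 \<le> p" and Q: "0 < Q" "Q \<le> Qs" and c: "0 < c"
  shows "p * Q / c * \<bar>ln (p * Q / c)\<bar> \<le> Qs / c * (p * \<bar>ln p\<bar>) + ((1 + Qs^2) + Qs * \<bar>ln c\<bar>) / c * p"
proof (cases "p = 0")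
  case True
  then show ?thesis by simp
next
  case False
  then have pp: "0 < p" using p by simp
  have Qs: "0 < Qs" using Q by simp
  have "ln (p * Q / c) = ln p + ln Q - ln c" using pp Q c by (simp add: ln_div ln_mult)
  then have "\<bar>ln (p * Q / c)\<bar> \<le> \<bar>ln p\<bar> + \<bar>ln Q\<bar> + \<bar>ln c\<bar>" by simp
  then have "p * Q / c * \<bar>ln (p * Q / c)\<bar> \<le> p * Q / c * (\<bar>ln p\<bar> + \<bar>ln Q\<bar> + \<bar>ln c\<bar>)"
    using pp Q c by (intro mult_left_mono) auto
  also have "\<dots> = Q / c * (p * \<bar>ln p\<bar>) + p / c * (Q * \<bar>ln Q\<bar>) + Q * \<bar>ln c\<bar> / c * p"
    using c by (simp add: field_simps)
  also have "\<dots> \<le> Qs / c * (p * \<bar>ln p\<bar>) + p / c * (1 + Qs^2) + Qs * \<bar>ln c\<bar> / c * p"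
  proof -
    have "Q / c * (p * \<bar>ln p\<bar>) \<le> Qs / c * (p * \<bar>ln p\<bar>)"
      using Q c pp by (intro mult_right_mono divide_right_mono) auto
    moreover have "p / c * (Q * \<bar>ln Q\<bar>) \<le> p / c * (1 + Qs^2)"
      using xlnx_bound[OF Q] pp c by (intro mult_left_mono) auto
    moreover have "Q * \<bar>ln c\<bar> / c * p \<le> Qs * \<bar>ln c\<bar> / c * p"
      using Q c pp by (intro mult_right_mono divide_right_mono mult_right_mono) auto
    ultimately show ?thesis by linarith
  qed
  also have "\<dots> = Qs / c * (p * \<bar>ln p\<bar>) + ((1 + Qs^2) + Qs * \<bar>ln c\<bar>) / c * p"
    using c by (simp add: field_simps)
  finally show ?thesis .
qed

lemma prod_if_subset: "finite I \<Longrightarrow> I' \<subseteq> I \<Longrightarrow> (\<Prod>k\<in>I. if k \<in> I' then f k else 1) = prod f I'"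
proof -
  assume "finite I" "I' \<subseteq> I"
  then have "prod f (I \<inter> I') = (\<Prod>k\<in>I. if k \<in> I' then f k else 1)" by (rule_tac prod.inter_restrict)
  moreover have "I \<inter> I' = I'" using \<open>I' \<subseteq> I\<close> by blast
  ultimately show ?thesis by simp
qed

lemma prod_lemma:
  fixes h :: "'w \<Rightarrow> ennreal" and g :: "'w \<Rightarrow> 'a \<Rightarrow> ennreal"
  assumes N: "prob_space N" and D: "prob_space D" and fin: "finite I" and I0: "0 \<notin> I" and I': "I' \<subseteq> I"
  and h[measurable]: "h \<in> borel_measurable N" and g[measurable]: "(\<lambda>(w,x). g w x) \<in> borel_measurable (N \<Otimes>\<^sub>M D)"
  shows "(\<integral>\<^sup>+z. h (fst z 0) * (\<Prod>k\<in>I'. g (fst z k) (snd z k)) \<partial>(PiM (insert 0 I) (\<lambda>_. N) \<Otimes>\<^sub>M PiM I (\<lambda>_. D)))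
     = (\<integral>\<^sup>+w. h w \<partial>N) * (\<integral>\<^sup>+w. \<integral>\<^sup>+x. g w x \<partial>D \<partial>N) ^ card I'"
proof -
  have sN: "sigma_finite_measure N" using N by (rule prob_space_imp_sigma_finite)
  have sD': "sigma_finite_measure D" using D by (rule prob_space_imp_sigma_finite)
  interpret PN: product_sigma_finite "\<lambda>_. N"
    unfolding product_sigma_finite_def using sN by simp
  interpret PD: product_sigma_finite "\<lambda>_. D"
    unfolding product_sigma_finite_def using sD' by simp
  interpret sD: sigma_finite_measure D by (rule sD')
  have pD: "prob_space (PiM I (\<lambda>_. D))" by (rule prob_space_PiM) (rule D)
  have spD: "sigma_finite_measure (PiM I (\<lambda>_. D))" using pD by (rule prob_space_imp_sigma_finite)
  have gk: "(\<lambda>z. g (fst z k) (snd z k)) \<in> borel_measurable (PiM (insert 0 I) (\<lambda>_. N) \<Otimes>\<^sub>M PiM I (\<lambda>_. D))"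
    if "k \<in> I" for k
  proof -
    have "(\<lambda>z. (fst z k, snd z k)) \<in> measurable (PiM (insert 0 I) (\<lambda>_. N) \<Otimes>\<^sub>M PiM I (\<lambda>_. D)) (N \<Otimes>\<^sub>M D)"
      by (intro measurable_Pair measurable_compose[OF measurable_fst measurable_component_singleton]
            measurable_compose[OF measurable_snd measurable_component_singleton]) (use that in auto)
    from measurable_compose[OF this g] show ?thesis by simp
  qed
  have gw: "g w \<in> borel_measurable D" if "w \<in> space N" for w
  proof -
    have "(\<lambda>y. (\<lambda>(w,x). g w x) (w, y)) \<in> borel_measurable D" by (rule measurable_compose_Pair1[OF that g])
    then show ?thesis by (simp only: case_prod_conv)
  qed
  have finI': "finite I'" using I' fin finite_subset by blast
  define G where "G = (\<lambda>w. \<integral>\<^sup>+x. g w x \<partial>D)" 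
  have Gm[measurable]: "G \<in> borel_measurable N" unfolding G_def by measurable
  have "(\<integral>\<^sup>+z. h (fst z 0) * (\<Prod>k\<in>I'. g (fst z k) (snd z k)) \<partial>(PiM (insert 0 I) (\<lambda>_. N) \<Otimes>\<^sub>M PiM I (\<lambda>_. D)))
     = (\<integral>\<^sup>+\<omega>. \<integral>\<^sup>+xs. h (\<omega> 0) * (\<Prod>k\<in>I'. g (\<omega> k) (xs k)) \<partial>PiM I (\<lambda>_. D) \<partial>PiM (insert 0 I) (\<lambda>_. N))"
    apply (subst sigma_finite_measure.nn_integral_fst[OF spD, symmetric])
    using I' by (intro borel_measurable_prod_ennreal borel_measurable_times_ennreal gk) auto
  also have "\<dots> = (\<integral>\<^sup>+\<omega>. h (\<omega> 0) * (\<Prod>k\<in>I'. G (\<omega> k)) \<partial>PiM (insert 0 I) (\<lambda>_. N))"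
  proof (rule nn_integral_cong)
    fix \<omega> assume \<omega>: "\<omega> \<in> space (PiM (insert 0 I) (\<lambda>_. N))"
    have "(\<integral>\<^sup>+xs. h (\<omega> 0) * (\<Prod>k\<in>I'. g (\<omega> k) (xs k)) \<partial>PiM I (\<lambda>_. D))
        = h (\<omega> 0) * (\<integral>\<^sup>+xs. (\<Prod>k\<in>I. (if k \<in> I' then g (\<omega> k) else (\<lambda>_. 1)) (xs k)) \<partial>PiM I (\<lambda>_. D))"
      apply (subst nn_integral_cmult[symmetric])
      subgoal using \<omega> I' fin
        apply (intro borel_measurable_prod_ennreal)
        apply (rule measurable_compose[OF measurable_component_singleton], assumption)
        by (auto simp: space_PiM intro!: gw)
      apply (rule nn_integral_cong)
      apply (subst prod_if_subset[OF fin I', where f="\<lambda>k. g (\<omega> k) (_ k)", symmetric])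
      apply (rule arg_cong[where f="\<lambda>u. h (\<omega> 0) * u"])
      by (rule prod.cong) auto
    also have "\<dots> = h (\<omega> 0) * (\<Prod>k\<in>I. integral\<^sup>N D (if k \<in> I' then g (\<omega> k) else (\<lambda>_. 1)))"
      apply (subst PD.product_nn_integral_prod)
      using fin \<omega> I' by (auto simp: space_PiM intro!: gw)
    also have "\<dots> = h (\<omega> 0) * (\<Prod>k\<in>I. if k \<in> I' then G (\<omega> k) else 1)"
      using D by (intro arg_cong[where f="\<lambda>u. h (\<omega> 0) * u"] prod.cong) (auto simp: G_def prob_space.emeasure_space_1)
    also have "\<dots> = h (\<omega> 0) * (\<Prod>k\<in>I'. G (\<omega> k))"
      by (simp only: prod_if_subset[OF fin I'])
    finally show "(\<integral>\<^sup>+xs. h (\<omega> 0) * (\<Prod>k\<in>I'. g (\<omega> k) (xs k)) \<partial>PiM I (\<lambda>_. D)) = h (\<omega> 0) * (\<Prod>k\<in>I'. G (\<omega> k))" .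
  qed
  also have "\<dots> = (\<integral>\<^sup>+\<omega>. (\<Prod>k\<in>insert 0 I. (if k = 0 then h else if k \<in> I' then G else (\<lambda>_. 1)) (\<omega> k)) \<partial>PiM (insert 0 I) (\<lambda>_. N))"
  proof (rule nn_integral_cong)
    fix \<omega>
    have "(\<Prod>k\<in>insert 0 I. (if k = 0 then h else if k \<in> I' then G else (\<lambda>_. 1)) (\<omega> k))
       = h (\<omega> 0) * (\<Prod>k\<in>I. (if k = 0 then h else if k \<in> I' then G else (\<lambda>_. 1)) (\<omega> k))"
      using fin I0 by (subst prod.insert) auto
    also have "(\<Prod>k\<in>I. (if k = 0 then h else if k \<in> I' then G else (\<lambda>_. 1)) (\<omega> k)) = (\<Prod>k\<in>I. if k \<in> I' then G (\<omega> k) else 1)"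
      using I0 by (intro prod.cong) auto
    finally show "h (\<omega> 0) * (\<Prod>k\<in>I'. G (\<omega> k)) = (\<Prod>k\<in>insert 0 I. (if k = 0 then h else if k \<in> I' then G else (\<lambda>_. 1)) (\<omega> k))"
      by (simp only: prod_if_subset[OF fin I'])
  qed
  also have "\<dots> = (\<Prod>k\<in>insert 0 I. integral\<^sup>N N (if k = 0 then h else if k \<in> I' then G else (\<lambda>_. 1)))"
    by (rule PN.product_nn_integral_prod) (use fin in auto)
  also have "\<dots> = (\<integral>\<^sup>+w. h w \<partial>N) * (\<Prod>k\<in>I. if k \<in> I' then integral\<^sup>N N G else 1)"
    using fin I0 N apply (subst prod.insert) apply simp_all
    apply (rule arg_cong[where f="\<lambda>u. integral\<^sup>N N h * u"])
    apply (rule prod.cong) by (auto simp: prob_space.emeasure_space_1)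
  also have "\<dots> = (\<integral>\<^sup>+w. h w \<partial>N) * (\<integral>\<^sup>+w. \<integral>\<^sup>+x. g w x \<partial>D \<partial>N) ^ card I'"
    by (simp only: prod_if_subset[OF fin I'] prod_constant) (simp add: G_def)
  finally show ?thesis .
qed


lemma nn_integral_pos_prob:
  assumes "prob_space M" "f \<in> borel_measurable M" "\<And>x. x \<in> space M \<Longrightarrow> 0 < f x"
  shows "0 < (\<integral>\<^sup>+x. ennreal (f x) \<partial>M)"
proof (rule ccontr)
  assume "\<not> 0 < (\<integral>\<^sup>+x. ennreal (f x) \<partial>M)"
  then have "(\<integral>\<^sup>+x. ennreal (f x) \<partial>M) = 0" by (simp add: zero_less_iff_neq_zero)
  then have "AE x in M. ennreal (f x) = 0" using assms(2) by (subst (asm) nn_integral_0_iff_AE) auto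
  then have "AE x in M. False" by (rule AE_mp) (auto intro!: AE_I2 dest: assms(3))
  then show False using prob_space.AE_False[OF assms(1)] by simp
qed

lemma upper_pt:
  fixes y s a l K :: real
  assumes "0 < y" "0 \<le> s" "0 < a" "0 \<le> l" "0 \<le> K"
  shows "K * y / (y + s) \<le> K / a * y + K * exp (l * a) * exp (- l * s)"
proof (cases "a \<le> s")
  case True
  have "y / (y + s) \<le> y / a" using assms True by (intro divide_left_mono) auto
  then have "K * (y / (y + s)) \<le> K * (y / a)" using assms by (intro mult_left_mono) auto
  moreover have "0 \<le> K * exp (l * a) * exp (- l * s)" using assms by simp
  ultimately show ?thesis by simp
next
  case False
  have "y / (y + s) \<le> 1" using assms by simp
  also have "1 \<le> exp (l * a) * exp (- l * s)"
  proof -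
    have "l * s \<le> l * a" using assms False by (intro mult_left_mono) auto
    then show ?thesis by (simp add: exp_add[symmetric] algebra_simps)
  qed
  finally have "K * (y / (y + s)) \<le> K * (exp (l * a) * exp (- l * s))" using assms by (intro mult_left_mono) auto
  moreover have "0 \<le> K / a * y" using assms by simp
  ultimately show ?thesis by (simp add: mult.assoc)
qed

lemma lower_pt:
  fixes y s a :: real
  assumes "0 < y" "0 \<le> s" "0 \<le> a"
  shows "2 * (y / (y + a)) \<le> y / (y + s) + y * (y + s) / (y + a)^2"
proof -
  define t where "t = y + s"
  define c where "c = y + a"
  have t: "0 < t" and c: "0 < c" using assms by (auto simp: t_def c_def)
  have "y / t + y * t / c^2 - 2 * (y / c) = y * (t - c)^2 / (t * c^2)"
    using t c by (simp add: field_simps power2_eq_square)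
  also have "\<dots> \<ge> 0" using assms t c by (intro divide_nonneg_pos mult_nonneg_nonneg) auto
  finally show ?thesis by (simp add: t_def c_def)
qed

lemma min_lim: "(\<lambda>n::nat. ennreal (min (t::real) (real n))) \<longlonglongrightarrow> ennreal t"
proof -
  obtain n0 :: nat where n0: "t \<le> real n0" using real_arch_simple by blast
  have "\<forall>\<^sub>F n in sequentially. ennreal (min t (real n)) = ennreal t"
    unfolding eventually_sequentially
    by (rule exI[of _ n0]) (use n0 in \<open>auto simp: min_def\<close>)
  then show ?thesis by (rule tendsto_eventually)
qed

lemma min_inc: "incseq (\<lambda>n::nat. \<lambda>x. ennreal (min (f x) (real n)))"
  unfolding incseq_def le_fun_def by (auto intro!: ennreal_leI)

lemma min_frac_le:
  fixes y a c :: real assumes "0 < y" "0 \<le> a" "0 < c"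
  shows "min y c / (c + a) \<le> y / (y + a)"
proof -
  have "min y c / (c + a) \<le> min y c / (min y c + a)" using assms by (intro divide_left_mono) auto
  also have "\<dots> \<le> y / (y + a)"
  proof -
    have "a * min y c \<le> a * y" using assms by (intro mult_left_mono) auto
    then have "min y c * (y + a) \<le> y * (min y c + a)" by (simp add: algebra_simps)
    then show ?thesis using assms by (simp add: divide_simps)
  qed
  finally show ?thesis .
qed

locale hks =
  fixes N :: "'w measure" and D :: "'a measure" and Y :: "'w \<Rightarrow> 'a \<Rightarrow> real" and y0 :: "'w \<Rightarrow> real"
  assumes N: "prob_space N" and D: "prob_space D"
  and Ym[measurable]: "(\<lambda>(w,x). Y w x) \<in> borel_measurable (N \<Otimes>\<^sub>M D)"
  and Ypos: "\<And>w x. w \<in> space N \<Longrightarrow> x \<in> space D \<Longrightarrow> 0 < Y w x"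
  and y0m[measurable]: "y0 \<in> borel_measurable N"
  and y0pos: "\<And>w. w \<in> space N \<Longrightarrow> 0 < y0 w"
  and mfin: "(\<integral>\<^sup>+w. \<integral>\<^sup>+x. ennreal (Y w x) \<partial>D \<partial>N) < \<infinity>"
  and qfin: "(\<integral>\<^sup>+w. ennreal (y0 w) \<partial>N) < \<infinity>"
begin

definition "P (K::nat) = PiM {0..<K} (\<lambda>_. N) \<Otimes>\<^sub>M PiM {1..<K} (\<lambda>_. D)"
definition "S (K::nat) z = (\<Sum>k\<in>{1..<K}. Y (fst z k) (snd z k))"
definition "F (K::nat) z = real K * y0 (fst z 0) / (y0 (fst z 0) + S K z)"
definition "m = enn2real (\<integral>\<^sup>+w. \<integral>\<^sup>+x. ennreal (Y w x) \<partial>D \<partial>N)"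
definition "q = enn2real (\<integral>\<^sup>+w. ennreal (y0 w) \<partial>N)"

lemma sD: "sigma_finite_measure D" using D by (rule prob_space_imp_sigma_finite)
lemma sN: "sigma_finite_measure N" using N by (rule prob_space_imp_sigma_finite)

lemma Yw[measurable]: "w \<in> space N \<Longrightarrow> Y w \<in> borel_measurable D"
proof -
  assume w: "w \<in> space N"
  have "(\<lambda>y. (\<lambda>(w,x). Y w x) (w, y)) \<in> borel_measurable D" by (rule measurable_compose_Pair1[OF w Ym])
  then show ?thesis by (simp only: case_prod_conv)
qed

lemma m_eq: "(\<integral>\<^sup>+w. \<integral>\<^sup>+x. ennreal (Y w x) \<partial>D \<partial>N) = ennreal m"
  using mfin by (simp add: m_def)
lemma q_eq: "(\<integral>\<^sup>+w. ennreal (y0 w) \<partial>N) = ennreal q"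
  using qfin by (simp add: q_def)

lemma pair_eq:
  assumes "(\<lambda>(w,x). f w x) \<in> borel_measurable (N \<Otimes>\<^sub>M D)"
  shows "(\<integral>\<^sup>+w. \<integral>\<^sup>+x. f w x \<partial>D \<partial>N) = (\<integral>\<^sup>+z. f (fst z) (snd z) \<partial>(N \<Otimes>\<^sub>M D))"
proof -
  interpret sD: sigma_finite_measure D by (rule sD)
  have "(\<integral>\<^sup>+z. f (fst z) (snd z) \<partial>(N \<Otimes>\<^sub>M D)) = (\<integral>\<^sup>+z. (\<lambda>(w,x). f w x) z \<partial>(N \<Otimes>\<^sub>M D))"
    by (simp add: case_prod_beta)
  also have "\<dots> = (\<integral>\<^sup>+w. \<integral>\<^sup>+x. (\<lambda>(w,x). f w x) (w,x) \<partial>D \<partial>N)"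
    by (rule sD.nn_integral_fst[symmetric]) (rule assms)
  finally show ?thesis by simp
qed

lemma pND: "prob_space (N \<Otimes>\<^sub>M D)"
  using N D by (simp add: prob_space_pair)

lemma m_pos: "0 < m"
proof -
  have "0 < (\<integral>\<^sup>+z. ennreal (Y (fst z) (snd z)) \<partial>(N \<Otimes>\<^sub>M D))"
  proof (rule nn_integral_pos_prob[OF pND])
    show "(\<lambda>z. Y (fst z) (snd z)) \<in> borel_measurable (N \<Otimes>\<^sub>M D)"
      using Ym by (simp add: case_prod_beta')
  qed (auto simp: space_pair_measure intro!: Ypos)
  then have "0 < ennreal m" using pair_eq[of "\<lambda>w x. ennreal (Y w x)"] m_eq by simp
  then show ?thesis by (simp add: ennreal_less_iff)
qed


lemma ins0: "1 \<le> K \<Longrightarrow> {0..<K} = insert 0 {1..<K::nat}" by auto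

lemma space_P: "z \<in> space (P K) \<Longrightarrow> k < K \<Longrightarrow> fst z k \<in> space N"
  "z \<in> space (P K) \<Longrightarrow> 1 \<le> k \<Longrightarrow> k < K \<Longrightarrow> snd z k \<in> space D"
  by (auto simp: P_def space_pair_measure space_PiM PiE_iff)

lemma meas_Yk[measurable]: "k \<in> {1..<K} \<Longrightarrow> (\<lambda>z. Y (fst z k) (snd z k)) \<in> borel_measurable (P K)"
proof -
  assume that: "k \<in> {1..<K}"
  have "(\<lambda>z. (fst z k, snd z k)) \<in> measurable (P K) (N \<Otimes>\<^sub>M D)" unfolding P_def
    by (intro measurable_Pair measurable_compose[OF measurable_fst measurable_component_singleton]
          measurable_compose[OF measurable_snd measurable_component_singleton]) (use that in auto)
  from measurable_compose[OF this Ym] show ?thesis by simp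
qed

lemma meas_h0: "1 \<le> K \<Longrightarrow> h \<in> borel_measurable N \<Longrightarrow> (\<lambda>z. h (fst z 0)) \<in> borel_measurable (P K)"
  unfolding P_def
  by (intro measurable_compose[OF measurable_compose[OF measurable_fst measurable_component_singleton]]) auto

lemma meas_S: "S K \<in> borel_measurable (P K)"
  unfolding S_def by (intro borel_measurable_sum meas_Yk) auto

lemma S_nonneg: "z \<in> space (P K) \<Longrightarrow> 0 \<le> S K z"
  unfolding S_def by (intro sum_nonneg less_imp_le[OF Ypos] space_P) auto

lemma meas_F: "1 \<le> K \<Longrightarrow> F K \<in> borel_measurable (P K)"
  unfolding F_def using meas_S[of K] meas_h0[OF _ y0m, of K]
  by (intro borel_measurable_divide borel_measurable_times borel_measurable_add) auto

lemma F_nonneg: "1 \<le> K \<Longrightarrow> z \<in> space (P K) \<Longrightarrow> 0 \<le> F K z"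
  unfolding F_def using S_nonneg[of z K] y0pos[OF space_P(1)[of z K 0]] by auto

lemma F_le: "1 \<le> K \<Longrightarrow> z \<in> space (P K) \<Longrightarrow> F K z \<le> real K"
proof -
  assume K: "1 \<le> K" and z: "z \<in> space (P K)"
  have y: "0 < y0 (fst z 0)" using y0pos[OF space_P(1)[OF z]] K by auto
  have s: "0 \<le> S K z" using S_nonneg[OF z] .
  have "y0 (fst z 0) / (y0 (fst z 0) + S K z) \<le> 1" using y s by simp
  then have "real K * (y0 (fst z 0) / (y0 (fst z 0) + S K z)) \<le> real K * 1"
    by (intro mult_left_mono) auto
  then show ?thesis unfolding F_def by simp
qed

lemma prodP:
  fixes h :: "'w \<Rightarrow> ennreal" and g :: "'w \<Rightarrow> 'a \<Rightarrow> ennreal"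
  assumes K: "1 \<le> K" and I': "I' \<subseteq> {1..<K}"
  and h: "h \<in> borel_measurable N" and g: "(\<lambda>(w,x). g w x) \<in> borel_measurable (N \<Otimes>\<^sub>M D)"
  shows "(\<integral>\<^sup>+z. h (fst z 0) * (\<Prod>k\<in>I'. g (fst z k) (snd z k)) \<partial>P K)
     = (\<integral>\<^sup>+w. h w \<partial>N) * (\<integral>\<^sup>+w. \<integral>\<^sup>+x. g w x \<partial>D \<partial>N) ^ card I'"
  unfolding P_def ins0[OF K] by (rule prod_lemma[OF N D _ _ I' h g]) auto

lemma E_h: "1 \<le> K \<Longrightarrow> h \<in> borel_measurable N \<Longrightarrow> (\<integral>\<^sup>+z. h (fst z 0) \<partial>P K) = (\<integral>\<^sup>+w. h w \<partial>N)"
  using prodP[of K "{}" h "\<lambda>_ _. 1"] by simp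

lemma E_hg: "k \<in> {1..<K} \<Longrightarrow> h \<in> borel_measurable N \<Longrightarrow> (\<lambda>(w,x). g w x) \<in> borel_measurable (N \<Otimes>\<^sub>M D) \<Longrightarrow>
  (\<integral>\<^sup>+z. h (fst z 0) * g (fst z k) (snd z k) \<partial>P K) = (\<integral>\<^sup>+w. h w \<partial>N) * (\<integral>\<^sup>+w. \<integral>\<^sup>+x. g w x \<partial>D \<partial>N)"
  using prodP[of K "{k}" h g] by simp

lemma E_g: "1 \<le> K \<Longrightarrow> (\<lambda>(w,x). g w x) \<in> borel_measurable (N \<Otimes>\<^sub>M D) \<Longrightarrow>
  (\<integral>\<^sup>+z. (\<Prod>k\<in>{1..<K}. g (fst z k) (snd z k)) \<partial>P K) = (\<integral>\<^sup>+w. \<integral>\<^sup>+x. g w x \<partial>D \<partial>N) ^ (K - 1)"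
  using prodP[of K "{1..<K}" "\<lambda>_. 1" g] N by (simp add: prob_space.emeasure_space_1)

lemma upper:
  assumes K: "1 \<le> K" and a: "0 < a" and l: "0 \<le> l"
  shows "(\<integral>\<^sup>+z. ennreal (F K z) \<partial>P K) \<le> ennreal (real K / a) * ennreal q
     + ennreal (real K * exp (l * a)) * (\<integral>\<^sup>+w. \<integral>\<^sup>+x. ennreal (exp (- l * Y w x)) \<partial>D \<partial>N) ^ (K - 1)"
proof -
  have gm: "(\<lambda>(w,x). ennreal (exp (- l * Y w x))) \<in> borel_measurable (N \<Otimes>\<^sub>M D)" by measurable
  have "(\<integral>\<^sup>+z. ennreal (F K z) \<partial>P K) \<le> (\<integral>\<^sup>+z. ennreal (real K / a) * ennreal (y0 (fst z 0))
     + ennreal (real K * exp (l * a)) * (\<Prod>k\<in>{1..<K}. ennreal (exp (- l * Y (fst z k) (snd z k)))) \<partial>P K)"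
  proof (rule nn_integral_mono)
    fix z assume z: "z \<in> space (P K)"
    have y: "0 < y0 (fst z 0)" using y0pos[OF space_P(1)[OF z]] K by auto
    have "F K z \<le> real K / a * y0 (fst z 0) + real K * exp (l * a) * exp (- l * S K z)"
      unfolding F_def by (rule upper_pt[OF y S_nonneg[OF z] a l]) simp
    also have "exp (- l * S K z) = (\<Prod>k\<in>{1..<K}. exp (- l * Y (fst z k) (snd z k)))"
      unfolding S_def by (simp add: exp_sum[symmetric] sum_distrib_left)
    finally have "ennreal (F K z) \<le> ennreal (real K / a * y0 (fst z 0) + real K * exp (l * a) * (\<Prod>k\<in>{1..<K}. exp (- l * Y (fst z k) (snd z k))))"
      by (rule ennreal_leI)
    also have "\<dots> = ennreal (real K / a) * ennreal (y0 (fst z 0))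
     + ennreal (real K * exp (l * a)) * (\<Prod>k\<in>{1..<K}. ennreal (exp (- l * Y (fst z k) (snd z k))))"
    proof -
      have n1: "0 \<le> real K / a * y0 (fst z 0)" "0 \<le> real K / a" "0 \<le> y0 (fst z 0)" using a y by auto
      have n2: "0 \<le> (\<Prod>k\<in>{1..<K}. exp (- l * Y (fst z k) (snd z k)))" "0 \<le> real K * exp (l * a)"
        by (auto intro: prod_nonneg)
      show ?thesis
        apply (subst ennreal_plus)
        subgoal by (rule n1)
        subgoal using n2 by simp
        apply (subst ennreal_mult[OF n1(2,3)])
        apply (subst ennreal_mult[OF n2(2,1)])
        apply (subst prod_ennreal)
        by auto
    qed
    finally show "ennreal (F K z) \<le> \<dots>" .
  qed
  also have "\<dots> = ennreal (real K / a) * (\<integral>\<^sup>+z. ennreal (y0 (fst z 0)) \<partial>P K)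
     + ennreal (real K * exp (l * a)) * (\<integral>\<^sup>+z. (\<Prod>k\<in>{1..<K}. ennreal (exp (- l * Y (fst z k) (snd z k)))) \<partial>P K)"
    apply (subst nn_integral_add)
    subgoal using K by (intro borel_measurable_times_ennreal borel_measurable_const meas_h0) auto
    subgoal by (intro borel_measurable_times_ennreal borel_measurable_const borel_measurable_prod_ennreal meas_Yk
      measurable_compose[OF meas_Yk, where g="\<lambda>t. ennreal (exp (- l * t))"]) auto
    apply (subst nn_integral_cmult)
    subgoal using K by (intro meas_h0) auto
    apply (subst nn_integral_cmult)
    subgoal by (intro borel_measurable_prod_ennreal
      measurable_compose[OF meas_Yk, where g="\<lambda>t. ennreal (exp (- l * t))"]) auto
    by simp
  also have "\<dots> = ennreal (real K / a) * ennreal q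
     + ennreal (real K * exp (l * a)) * (\<integral>\<^sup>+w. \<integral>\<^sup>+x. ennreal (exp (- l * Y w x)) \<partial>D \<partial>N) ^ (K - 1)"
    using E_h[OF K, of "\<lambda>w. ennreal (y0 w)"] E_g[OF K gm] q_eq by simp
  finally show ?thesis .
qed

lemma lower:
  assumes K: "1 \<le> K"
  shows "ennreal (real K) * (\<integral>\<^sup>+w. ennreal (y0 w / (y0 w + (real K - 1) * m)) \<partial>N) \<le> (\<integral>\<^sup>+z. ennreal (F K z) \<partial>P K)"
proof -
  define a where "a = (real K - 1) * m"
  have a: "0 \<le> a" using K m_pos by (simp add: a_def)
  define h1 where "h1 w = y0 w / (y0 w + a)" for w
  define h2 where "h2 w = y0 w / (y0 w + a)^2" for w
  define h3 where "h3 w = y0 w * y0 w / (y0 w + a)^2" for w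
  have h1m[measurable]: "h1 \<in> borel_measurable N" unfolding h1_def by measurable
  have h2m[measurable]: "h2 \<in> borel_measurable N" unfolding h2_def by measurable
  have h3m[measurable]: "h3 \<in> borel_measurable N" unfolding h3_def by measurable
  have h123: "h1 w = h3 w + a * h2 w" if "w \<in> space N" for w
  proof -
    have "0 < y0 w" using y0pos[OF that] .
    then have nz: "y0 w + a \<noteq> 0" using a by auto
    have "h3 w + a * h2 w = (y0 w * (y0 w + a)) / ((y0 w + a) * (y0 w + a))"
      unfolding h2_def h3_def by (simp add: power2_eq_square add_divide_distrib algebra_simps)
    also have "\<dots> = h1 w" unfolding h1_def using nz by simp
    finally show ?thesis by simp
  qed
  have h2n: "0 \<le> h2 w" "0 \<le> h3 w" "0 \<le> h1 w" if "w \<in> space N" for w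
    using y0pos[OF that] a by (auto simp: h1_def h2_def h3_def)
  have h1le: "h1 w \<le> 1" if "w \<in> space N" for w
    using y0pos[OF that] a by (auto simp: h1_def)
  define C where "C = (\<integral>\<^sup>+w. ennreal (h3 w) \<partial>N)"
  define H where "H = (\<integral>\<^sup>+w. ennreal (h2 w) \<partial>N)"
  define B where "B = ennreal (real K) * (\<integral>\<^sup>+w. ennreal (h1 w) \<partial>N)"
  have B_eq: "B = ennreal (real K) * (C + ennreal a * H)"
  proof -
    have "(\<integral>\<^sup>+w. ennreal (h1 w) \<partial>N) = (\<integral>\<^sup>+w. ennreal (h3 w) + ennreal a * ennreal (h2 w) \<partial>N)"
      by (rule nn_integral_cong) (simp add: h123 h2n a ennreal_plus ennreal_mult)
    also have "\<dots> = C + ennreal a * H" unfolding C_def H_def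
      by (subst nn_integral_add) (auto simp: nn_integral_cmult)
    finally show ?thesis unfolding B_def by simp
  qed
  have B_fin: "B < \<infinity>"
  proof -
    have "(\<integral>\<^sup>+w. ennreal (h1 w) \<partial>N) \<le> (\<integral>\<^sup>+w. 1 \<partial>N)"
      by (rule nn_integral_mono) (simp add: h1le)
    also have "\<dots> = 1" using N by (simp add: prob_space.emeasure_space_1)
    finally show ?thesis unfolding B_def by (simp add: ennreal_mult_less_top order_le_less_trans)
  qed
  have "(\<integral>\<^sup>+z. ennreal 2 * ennreal (real K) * ennreal (h1 (fst z 0)) \<partial>P K) \<le>
    (\<integral>\<^sup>+z. ennreal (F K z) + ennreal (real K) * ennreal (h3 (fst z 0))
        + (\<Sum>k\<in>{1..<K}. ennreal (real K * h2 (fst z 0)) * ennreal (Y (fst z k) (snd z k))) \<partial>P K)"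
  proof (rule nn_integral_mono)
    fix z assume z: "z \<in> space (P K)"
    have w: "fst z 0 \<in> space N" using space_P(1)[OF z] K by auto
    have y: "0 < y0 (fst z 0)" using y0pos[OF w] .
    have Yk: "0 < Y (fst z k) (snd z k)" if "k \<in> {1..<K}" for k
      using that by (intro Ypos space_P[OF z]) auto
    have "2 * (y0 (fst z 0) / (y0 (fst z 0) + a)) \<le> y0 (fst z 0) / (y0 (fst z 0) + S K z)
       + y0 (fst z 0) * (y0 (fst z 0) + S K z) / (y0 (fst z 0) + a)^2"
      by (rule lower_pt[OF y S_nonneg[OF z] a])
    then have "real K * (2 * (y0 (fst z 0) / (y0 (fst z 0) + a))) \<le> real K * (y0 (fst z 0) / (y0 (fst z 0) + S K z)
       + y0 (fst z 0) * (y0 (fst z 0) + S K z) / (y0 (fst z 0) + a)^2)"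
      by (intro mult_left_mono) auto
    also have "\<dots> = F K z + real K * h3 (fst z 0) + (\<Sum>k\<in>{1..<K}. real K * h2 (fst z 0) * Y (fst z k) (snd z k))"
    proof -
      have e1: "y0 (fst z 0) * (y0 (fst z 0) + S K z) / (y0 (fst z 0) + a)^2 = h3 (fst z 0) + h2 (fst z 0) * S K z"
        unfolding h2_def h3_def by (simp add: distrib_left add_divide_distrib)
      show ?thesis unfolding e1
        by (simp add: F_def S_def distrib_left sum_distrib_left mult.assoc)
    qed
    finally have le: "2 * real K * h1 (fst z 0) \<le> F K z + real K * h3 (fst z 0) + (\<Sum>k\<in>{1..<K}. real K * h2 (fst z 0) * Y (fst z k) (snd z k))"
      by (simp add: h1_def mult.assoc mult.left_commute)
    have nn: "0 \<le> F K z" "0 \<le> real K * h3 (fst z 0)" "\<And>k. k \<in> {1..<K} \<Longrightarrow> 0 \<le> real K * h2 (fst z 0) * Y (fst z k) (snd z k)"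
      "0 \<le> real K * h2 (fst z 0)"
      using F_nonneg[OF K z] h2n[OF w] Yk by (auto intro!: mult_nonneg_nonneg simp: order_less_imp_le)
    have "ennreal 2 * ennreal (real K) * ennreal (h1 (fst z 0)) = ennreal (2 * real K * h1 (fst z 0))"
      using h2n[OF w] by (simp add: ennreal_mult)
    also have "\<dots> \<le> ennreal (F K z + real K * h3 (fst z 0) + (\<Sum>k\<in>{1..<K}. real K * h2 (fst z 0) * Y (fst z k) (snd z k)))"
      by (rule ennreal_leI[OF le])
    also have "\<dots> = ennreal (F K z) + ennreal (real K) * ennreal (h3 (fst z 0))
        + (\<Sum>k\<in>{1..<K}. ennreal (real K * h2 (fst z 0)) * ennreal (Y (fst z k) (snd z k)))"
    proof -
      have s0: "0 \<le> (\<Sum>k\<in>{1..<K}. real K * h2 (fst z 0) * Y (fst z k) (snd z k))"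
        using nn(3) by (intro sum_nonneg) auto
      have "ennreal (F K z + real K * h3 (fst z 0) + (\<Sum>k\<in>{1..<K}. real K * h2 (fst z 0) * Y (fst z k) (snd z k)))
         = ennreal (F K z) + ennreal (real K * h3 (fst z 0)) + ennreal (\<Sum>k\<in>{1..<K}. real K * h2 (fst z 0) * Y (fst z k) (snd z k))"
        using nn s0 by (simp add: ennreal_plus)
      also have "ennreal (\<Sum>k\<in>{1..<K}. real K * h2 (fst z 0) * Y (fst z k) (snd z k))
          = (\<Sum>k\<in>{1..<K}. ennreal (real K * h2 (fst z 0) * Y (fst z k) (snd z k)))"
        using nn(3) by (rule sum_ennreal[symmetric])
      also have "\<dots> = (\<Sum>k\<in>{1..<K}. ennreal (real K * h2 (fst z 0)) * ennreal (Y (fst z k) (snd z k)))"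
        using nn(4) Yk by (intro sum.cong refl) (simp add: ennreal_mult order_less_imp_le)
      also have "ennreal (real K * h3 (fst z 0)) = ennreal (real K) * ennreal (h3 (fst z 0))"
        using h2n[OF w] by (simp add: ennreal_mult)
      finally show ?thesis .
    qed
    finally show "ennreal 2 * ennreal (real K) * ennreal (h1 (fst z 0)) \<le> \<dots>" .
  qed
  also have "\<dots> = (\<integral>\<^sup>+z. ennreal (F K z) \<partial>P K) + ennreal (real K) * (\<integral>\<^sup>+z. ennreal (h3 (fst z 0)) \<partial>P K)
      + (\<Sum>k\<in>{1..<K}. (\<integral>\<^sup>+z. ennreal (real K * h2 (fst z 0)) * ennreal (Y (fst z k) (snd z k)) \<partial>P K))"
    apply (subst nn_integral_add)
    subgoal using meas_F[OF K] meas_h0[OF K h3m] by measurable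
    subgoal using K by (intro borel_measurable_sum borel_measurable_times_ennreal measurable_compose[OF meas_Yk]
        measurable_compose[OF meas_h0[OF K h2m]]) auto
    apply (subst nn_integral_add)
    subgoal using meas_F[OF K] by measurable
    subgoal using meas_h0[OF K h3m] by measurable
    apply (subst nn_integral_sum)
    subgoal using K by (intro borel_measurable_times_ennreal measurable_compose[OF meas_Yk]
        measurable_compose[OF meas_h0[OF K h2m]]) auto
    apply (subst nn_integral_cmult)
    subgoal using meas_h0[OF K h3m] by measurable
    by simp
  also have "\<dots> = (\<integral>\<^sup>+z. ennreal (F K z) \<partial>P K) + ennreal (real K) * C
      + (\<Sum>k\<in>{1..<K}. ennreal (real K) * H * ennreal m)"
  proof -
    have "(\<integral>\<^sup>+z. ennreal (h3 (fst z 0)) \<partial>P K) = C" unfolding C_def by (rule E_h[OF K]) measurable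
    moreover have "(\<integral>\<^sup>+z. ennreal (real K * h2 (fst z 0)) * ennreal (Y (fst z k) (snd z k)) \<partial>P K) = ennreal (real K) * H * ennreal m"
      if k: "k \<in> {1..<K}" for k
    proof -
      have "(\<integral>\<^sup>+z. ennreal (real K * h2 (fst z 0)) * ennreal (Y (fst z k) (snd z k)) \<partial>P K)
          = (\<integral>\<^sup>+w. ennreal (real K * h2 w) \<partial>N) * ennreal m"
        using E_hg[OF k, of "\<lambda>w. ennreal (real K * h2 w)" "\<lambda>w x. ennreal (Y w x)"] m_eq by simp
      also have "(\<integral>\<^sup>+w. ennreal (real K * h2 w) \<partial>N) = ennreal (real K) * H"
        unfolding H_def by (subst nn_integral_cmult[symmetric]) (auto intro!: nn_integral_cong simp: ennreal_mult h2n)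
      finally show ?thesis .
    qed
    ultimately show ?thesis by simp
  qed
  also have "\<dots> = (\<integral>\<^sup>+z. ennreal (F K z) \<partial>P K) + B"
  proof -
    have "a = real (K - 1) * m" using K by (simp add: a_def of_nat_diff)
    then have "ennreal a = ennreal (real (K - 1)) * ennreal m"
      using m_pos by (simp add: ennreal_mult)
    also have "ennreal (real (K - 1)) = of_nat (K - 1)" by (rule ennreal_of_nat_eq_real_of_nat[symmetric])
    finally have ea: "ennreal a = of_nat (K - 1) * ennreal m" .
    have "(\<Sum>k\<in>{1..<K}. ennreal (real K) * H * ennreal m) = of_nat (K - 1) * (ennreal (real K) * H * ennreal m)"
      by (simp only: sum_constant card_atLeastLessThan)
    also have "\<dots> = ennreal (real K) * (ennreal a * H)"
      unfolding ea by (simp only: ac_simps)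
    finally have "(\<Sum>k\<in>{1..<K}. ennreal (real K) * H * ennreal m) = ennreal (real K) * (ennreal a * H)" .
    then show ?thesis unfolding B_eq by (simp add: distrib_left add.assoc)
  qed
  finally have le2: "(\<integral>\<^sup>+z. ennreal 2 * ennreal (real K) * ennreal (h1 (fst z 0)) \<partial>P K) \<le> (\<integral>\<^sup>+z. ennreal (F K z) \<partial>P K) + B" .
  have LHS: "(\<integral>\<^sup>+z. ennreal 2 * ennreal (real K) * ennreal (h1 (fst z 0)) \<partial>P K) = ennreal 2 * B"
  proof -
    have "(\<integral>\<^sup>+z. ennreal 2 * ennreal (real K) * ennreal (h1 (fst z 0)) \<partial>P K) = ennreal 2 * ennreal (real K) * (\<integral>\<^sup>+z. ennreal (h1 (fst z 0)) \<partial>P K)"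
      by (rule nn_integral_cmult) (use meas_h0[OF K h1m] in measurable)
    also have "(\<integral>\<^sup>+z. ennreal (h1 (fst z 0)) \<partial>P K) = (\<integral>\<^sup>+ w. ennreal (h1 w) \<partial>N)" by (rule E_h[OF K]) measurable
    finally show ?thesis by (simp add: B_def mult.assoc)
  qed
  have e2: "ennreal 2 * B = B + B" by (simp only: ennreal_numeral mult_2)
  have e3: "(\<integral>\<^sup>+z. ennreal (F K z) \<partial>P K) + B = B + (\<integral>\<^sup>+z. ennreal (F K z) \<partial>P K)" by (rule add.commute)
  have "B + B \<le> B + (\<integral>\<^sup>+z. ennreal (F K z) \<partial>P K)"
    using le2 unfolding LHS e2 e3 .
  then have "B = \<infinity> \<or> B \<le> (\<integral>\<^sup>+z. ennreal (F K z) \<partial>P K)"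
    by (rule ennreal_add_left_cancel_le[THEN iffD1])
  then have "B \<le> (\<integral>\<^sup>+z. ennreal (F K z) \<partial>P K)" using B_fin by auto
  then show ?thesis unfolding B_def h1_def a_def .
qed
definition "phi l = enn2real (\<integral>\<^sup>+w. \<integral>\<^sup>+x. ennreal (exp (- l * Y w x)) \<partial>D \<partial>N)"
definition "mc c = enn2real (\<integral>\<^sup>+w. \<integral>\<^sup>+x. ennreal (min (Y w x) c) \<partial>D \<partial>N)"
definition "qc c = enn2real (\<integral>\<^sup>+w. ennreal (min (y0 w) c) \<partial>N)"

lemma phi_ennreal_bound:
  assumes l: "0 \<le> l" and c: "0 < c"
  shows "(\<integral>\<^sup>+w. \<integral>\<^sup>+x. ennreal (exp (- l * Y w x)) \<partial>D \<partial>N) + ennreal l * (\<integral>\<^sup>+w. \<integral>\<^sup>+x. ennreal (min (Y w x) c) \<partial>D \<partial>N)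
     \<le> ennreal (1 + l^2 * c^2)"
proof -
  have m1: "(\<lambda>z. ennreal (exp (- l * Y (fst z) (snd z)))) \<in> borel_measurable (N \<Otimes>\<^sub>M D)"
    using Ym by (simp add: case_prod_beta')
  have m2: "(\<lambda>z. ennreal (min (Y (fst z) (snd z)) c)) \<in> borel_measurable (N \<Otimes>\<^sub>M D)"
    using Ym by (simp add: case_prod_beta')
  have "(\<integral>\<^sup>+w. \<integral>\<^sup>+x. ennreal (exp (- l * Y w x)) \<partial>D \<partial>N) + ennreal l * (\<integral>\<^sup>+w. \<integral>\<^sup>+x. ennreal (min (Y w x) c) \<partial>D \<partial>N)
     = (\<integral>\<^sup>+z. ennreal (exp (- l * Y (fst z) (snd z))) \<partial>(N \<Otimes>\<^sub>M D)) + ennreal l * (\<integral>\<^sup>+z. ennreal (min (Y (fst z) (snd z)) c) \<partial>(N \<Otimes>\<^sub>M D))"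
    by (simp add: pair_eq)
  also have "\<dots> = (\<integral>\<^sup>+z. ennreal (exp (- l * Y (fst z) (snd z))) + ennreal l * ennreal (min (Y (fst z) (snd z)) c) \<partial>(N \<Otimes>\<^sub>M D))"
    using m1 m2 by (simp add: nn_integral_add nn_integral_cmult)
  also have "\<dots> \<le> (\<integral>\<^sup>+z. ennreal (1 + l^2 * c^2) \<partial>(N \<Otimes>\<^sub>M D))"
  proof (rule nn_integral_mono)
    fix z assume z: "z \<in> space (N \<Otimes>\<^sub>M D)"
    have y: "0 < Y (fst z) (snd z)" using z by (auto simp: space_pair_measure intro!: Ypos)
    have "ennreal (exp (- l * Y (fst z) (snd z))) + ennreal l * ennreal (min (Y (fst z) (snd z)) c)
        = ennreal (exp (- l * Y (fst z) (snd z)) + l * min (Y (fst z) (snd z)) c)"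
      using l y c by (simp add: ennreal_plus ennreal_mult)
    also have "\<dots> \<le> ennreal (1 + l^2 * c^2)"
      by (rule ennreal_leI[OF exp_min_bound[OF y l c]])
    finally show "ennreal (exp (- l * Y (fst z) (snd z))) + ennreal l * ennreal (min (Y (fst z) (snd z)) c) \<le> ennreal (1 + l^2 * c^2)" .
  qed
  also have "\<dots> = ennreal (1 + l^2 * c^2)" using pND by (simp add: prob_space.emeasure_space_1)
  finally show ?thesis .
qed

lemma fin_of_bound: "(X::ennreal) + Z \<le> ennreal r \<Longrightarrow> X = ennreal (enn2real X)"
proof -
  assume h: "X + Z \<le> ennreal r"
  have "X \<le> X + Z" by (rule add_increasing2) auto
  also note h
  finally have "X < top" using ennreal_less_top le_less_trans by blast
  then show ?thesis by simp
qed

lemma fin_of_bound2: "(Z::ennreal) + ennreal l * X \<le> ennreal r \<Longrightarrow> 0 < l \<Longrightarrow> X = ennreal (enn2real X)"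
proof -
  assume h: "Z + ennreal l * X \<le> ennreal r" and l: "0 < l"
  have "ennreal l * X \<le> Z + ennreal l * X" by (rule add_increasing) auto
  also note h
  finally have "ennreal l * X < top" using ennreal_less_top le_less_trans by blast
  then have "X < top" using l by (auto simp: ennreal_mult_less_top top.not_eq_extremum)
  then show ?thesis by simp
qed

lemma phi_fin: "0 \<le> l \<Longrightarrow> (\<integral>\<^sup>+w. \<integral>\<^sup>+x. ennreal (exp (- l * Y w x)) \<partial>D \<partial>N) = ennreal (phi l)"
  unfolding phi_def by (rule fin_of_bound[OF phi_ennreal_bound[of l 1]]) auto

lemma mc_fin: "0 < c \<Longrightarrow> (\<integral>\<^sup>+w. \<integral>\<^sup>+x. ennreal (min (Y w x) c) \<partial>D \<partial>N) = ennreal (mc c)"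
  unfolding mc_def by (rule fin_of_bound2[OF phi_ennreal_bound[of 1 c]]) auto

lemma phi_bound:
  assumes l: "0 \<le> l" and c: "0 < c"
  shows "phi l \<le> exp (- l * mc c + l^2 * c^2)"
proof -
  have "ennreal (phi l) + ennreal l * ennreal (mc c) \<le> ennreal (1 + l^2 * c^2)"
    using phi_ennreal_bound[OF l c] phi_fin[OF l] mc_fin[OF c] by simp
  then have "ennreal (phi l + l * mc c) \<le> ennreal (1 + l^2 * c^2)"
    using l by (simp add: ennreal_plus ennreal_mult phi_def mc_def)
  then have "phi l + l * mc c \<le> 1 + l^2 * c^2"
    by (subst (asm) ennreal_le_iff) (auto intro: add_nonneg_nonneg)
  then have "phi l \<le> 1 + (- l * mc c + l^2 * c^2)" by simp
  also have "\<dots> \<le> exp (- l * mc c + l^2 * c^2)" by (rule exp_ge_add_one_self)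
  finally show ?thesis .
qed

lemma mc_lim: "(\<lambda>n::nat. mc (real n)) \<longlonglongrightarrow> m"
proof -
  have "(\<lambda>n::nat. \<integral>\<^sup>+z. ennreal (min (Y (fst z) (snd z)) (real n)) \<partial>(N \<Otimes>\<^sub>M D)) \<longlonglongrightarrow> (\<integral>\<^sup>+z. ennreal (Y (fst z) (snd z)) \<partial>(N \<Otimes>\<^sub>M D))"
  proof (rule nn_integral_LIMSEQ)
    show "incseq (\<lambda>n z. ennreal (min (Y (fst z) (snd z)) (real n)))"
      by (rule min_inc)
    show "(\<lambda>z. ennreal (min (Y (fst z) (snd z)) (real n))) \<in> borel_measurable (N \<Otimes>\<^sub>M D)" for n
      using Ym by (simp add: case_prod_beta')
    show "(\<lambda>n. ennreal (min (Y (fst z) (snd z)) (real n))) \<longlonglongrightarrow> ennreal (Y (fst z) (snd z))" for z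
      by (rule min_lim)
  qed
  then have "(\<lambda>n::nat. \<integral>\<^sup>+w. \<integral>\<^sup>+x. ennreal (min (Y w x) (real n)) \<partial>D \<partial>N) \<longlonglongrightarrow> ennreal m"
    using m_eq by (simp add: pair_eq)
  from tendsto_enn2real[OF this] show ?thesis unfolding mc_def using m_pos by simp
qed

lemma qc_lim: "(\<lambda>n::nat. qc (real n)) \<longlonglongrightarrow> q"
proof -
  have "(\<lambda>n::nat. \<integral>\<^sup>+w. ennreal (min (y0 w) (real n)) \<partial>N) \<longlonglongrightarrow> (\<integral>\<^sup>+w. ennreal (y0 w) \<partial>N)"
    by (rule nn_integral_LIMSEQ[OF min_inc _ min_lim]) simp
  then have "(\<lambda>n::nat. \<integral>\<^sup>+w. ennreal (min (y0 w) (real n)) \<partial>N) \<longlonglongrightarrow> ennreal q"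
    using q_eq by simp
  from tendsto_enn2real[OF this] show ?thesis unfolding qc_def by (simp add: q_def)
qed

definition "HKv K = enn2real (\<integral>\<^sup>+z. ennreal (F K z) \<partial>P K)"

lemma F_int_fin: "1 \<le> K \<Longrightarrow> (\<integral>\<^sup>+z. ennreal (F K z) \<partial>P K) < \<infinity>"
proof -
  assume K: "1 \<le> K"
  have pP: "prob_space (P K)" unfolding P_def
    by (rule prob_space_pair; rule prob_space_PiM; simp add: N D)
  have "(\<integral>\<^sup>+z. ennreal (F K z) \<partial>P K) \<le> (\<integral>\<^sup>+z. ennreal (real K) \<partial>P K)"
    by (rule nn_integral_mono, rule ennreal_leI, rule F_le[OF K])
  also have "\<dots> = ennreal (real K)" using prob_space.emeasure_space_1[OF pP] by simp
  also have "\<dots> < \<infinity>" by simp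
  finally show ?thesis .
qed

lemma HKv_lower:
  assumes K: "1 \<le> K" and c: "0 < c"
  shows "real K * qc c / (c + (real K - 1) * m) \<le> HKv K"
proof -
  define a where "a = (real K - 1) * m"
  have a: "0 \<le> a" using K m_pos by (simp add: a_def)
  have qcf: "(\<integral>\<^sup>+w. ennreal (min (y0 w) c) \<partial>N) = ennreal (qc c)"
  proof -
    have "(\<integral>\<^sup>+w. ennreal (min (y0 w) c) \<partial>N) \<le> (\<integral>\<^sup>+w. ennreal c \<partial>N)"
      by (rule nn_integral_mono) (auto intro!: ennreal_leI)
    also have "\<dots> = ennreal c" using prob_space.emeasure_space_1[OF N] by simp
    also have "\<dots> < top" by simp
    finally have "(\<integral>\<^sup>+w. ennreal (min (y0 w) c) \<partial>N) < top" .
    then show ?thesis unfolding qc_def by simp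
  qed
  have qc0: "0 \<le> qc c" by (simp add: qc_def)
  have ca: "0 \<le> 1 / (c + a)" using c a by simp
  have "real K * qc c / (c + a) = real K * (1 / (c + a) * qc c)" by simp
  then have "ennreal (real K * qc c / (c + a)) = ennreal (real K) * (ennreal (1 / (c + a)) * ennreal (qc c))"
    using ca qc0 by (simp only: ennreal_mult mult_nonneg_nonneg of_nat_0_le_iff)
  also have "\<dots> = ennreal (real K) * (\<integral>\<^sup>+w. ennreal (min (y0 w) c / (c + a)) \<partial>N)"
  proof -
    have "(\<integral>\<^sup>+w. ennreal (min (y0 w) c / (c + a)) \<partial>N) = (\<integral>\<^sup>+w. ennreal (1 / (c + a)) * ennreal (min (y0 w) c) \<partial>N)"
    proof (rule nn_integral_cong)
      fix w assume w: "w \<in> space N"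
      have "min (y0 w) c / (c + a) = 1 / (c + a) * min (y0 w) c" by simp
      moreover have "0 \<le> min (y0 w) c" using y0pos[OF w] c by simp
      ultimately show "ennreal (min (y0 w) c / (c + a)) = ennreal (1 / (c + a)) * ennreal (min (y0 w) c)"
        using ca by (simp only: ennreal_mult)
    qed
    also have "\<dots> = ennreal (1 / (c + a)) * ennreal (qc c)"
      by (subst nn_integral_cmult) (auto simp: qcf)
    finally show ?thesis by simp
  qed
  also have "\<dots> \<le> ennreal (real K) * (\<integral>\<^sup>+w. ennreal (y0 w / (y0 w + a)) \<partial>N)"
    by (intro mult_left_mono nn_integral_mono ennreal_leI min_frac_le y0pos a c) auto
  also have "\<dots> \<le> (\<integral>\<^sup>+z. ennreal (F K z) \<partial>P K)" using lower[OF K] by (simp add: a_def)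
  finally have "ennreal (real K * qc c / (c + a)) \<le> (\<integral>\<^sup>+z. ennreal (F K z) \<partial>P K)" .
  then have "enn2real (ennreal (real K * qc c / (c + a))) \<le> HKv K"
    unfolding HKv_def using F_int_fin[OF K] by (intro enn2real_mono) auto
  moreover have "0 \<le> qc c" by (simp add: qc_def)
  ultimately show ?thesis using c a by (simp add: a_def)
qed

lemma HKv_upper:
  assumes K: "2 \<le> K" and c: "0 < c" and d: "0 < d" and mp: "0 < mc c - d"
  shows "HKv K \<le> real K * q / ((real K - 1) * (mc c - d)) + real K * exp (-(real K - 1) * (d^2 / (4 * c^2)))"
proof -
  have K1: "1 \<le> K" using K by simp
  define a where "a = (real K - 1) * (mc c - d)"
  define l where "l = d / (2 * c^2)"
  have a: "0 < a" using K mp by (simp add: a_def)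
  have l: "0 \<le> l" using d c by (simp add: l_def)
  have ph0: "0 \<le> phi l" by (simp add: phi_def)
  have q0: "0 \<le> q" by (simp add: q_def)
  define R where "R = real K / a * q + real K * exp (l * a) * phi l ^ (K - 1)"
  have "(\<integral>\<^sup>+z. ennreal (F K z) \<partial>P K) \<le> ennreal (real K / a) * ennreal q
     + ennreal (real K * exp (l * a)) * (ennreal (phi l)) ^ (K - 1)"
    using upper[OF K1 a l] phi_fin[OF l] by simp
  also have "\<dots> = ennreal R"
  proof -
    have "ennreal R = ennreal (real K / a * q) + ennreal (real K * exp (l * a) * phi l ^ (K - 1))"
      unfolding R_def using a q0 ph0 by (intro ennreal_plus) auto
    also have "ennreal (real K / a * q) = ennreal (real K / a) * ennreal q"
      using a q0 by (intro ennreal_mult) auto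
    also have "ennreal (real K * exp (l * a) * phi l ^ (K - 1)) = ennreal (real K * exp (l * a)) * ennreal (phi l ^ (K - 1))"
      using ph0 by (intro ennreal_mult) auto
    also have "ennreal (phi l ^ (K - 1)) = ennreal (phi l) ^ (K - 1)"
      using ph0 by (rule ennreal_power[symmetric])
    finally show ?thesis by simp
  qed
  finally have "HKv K \<le> R" unfolding HKv_def
    by (intro enn2real_leI) (auto simp: R_def a q0 ph0 less_imp_le)
  also have "R \<le> real K / a * q + real K * exp (-(real K - 1) * (d^2 / (4 * c^2)))"
  proof -
    have "phi l ^ (K - 1) \<le> exp (- l * mc c + l^2 * c^2) ^ (K - 1)"
      by (intro power_mono phi_bound l c ph0)
    also have "\<dots> = exp (real (K - 1) * (- l * mc c + l^2 * c^2))"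
      by (simp add: exp_of_nat_mult)
    finally have "exp (l * a) * phi l ^ (K - 1) \<le> exp (l * a) * exp (real (K - 1) * (- l * mc c + l^2 * c^2))"
      by (intro mult_left_mono) auto
    also have "\<dots> = exp (l * a + real (K - 1) * (- l * mc c + l^2 * c^2))" by (simp add: exp_add)
    also have "l * a + real (K - 1) * (- l * mc c + l^2 * c^2) = -(real K - 1) * (d^2 / (4 * c^2))"
      using K c unfolding a_def l_def by (simp add: of_nat_diff field_simps power2_eq_square)
    finally have "real K * (exp (l * a) * phi l ^ (K - 1)) \<le> real K * exp (-(real K - 1) * (d^2 / (4 * c^2)))"
      by (intro mult_left_mono) auto
    then show ?thesis unfolding R_def by (simp add: mult.assoc)
  qed
  finally show ?thesis by (simp add: a_def)
qed

lemma HK_lim: "HKv \<longlonglongrightarrow> q / m"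
proof (rule order_tendstoI)
  fix u assume u: "u < q / m"
  have "(\<lambda>n. qc (real n) / m) \<longlonglongrightarrow> q / m"
    using m_pos by (intro tendsto_divide qc_lim tendsto_const) auto
  from order_tendstoD(1)[OF this u] obtain N0 where N0: "\<And>n. n \<ge> N0 \<Longrightarrow> u < qc (real n) / m"
    unfolding eventually_sequentially by blast
  define n where "n = max N0 1"
  have un: "u < qc (real n) / m" using N0 by (simp add: n_def)
  have c: "0 < real n" by (simp add: n_def)
  have "(\<lambda>K. real K * qc (real n) / (real n + (real K - 1) * m)) \<longlonglongrightarrow> qc (real n) / m"
    by (rule lim_ratio[OF m_pos])
  from order_tendstoD(1)[OF this un]
  have ev: "\<forall>\<^sub>F K in sequentially. u < real K * qc (real n) / (real n + (real K - 1) * m)" .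
  show "\<forall>\<^sub>F K in sequentially. u < HKv K"
    using eventually_conj[OF ev eventually_ge_at_top[of "1::nat"]]
  proof (rule eventually_mono)
    fix K :: nat assume h: "u < real K * qc (real n) / (real n + (real K - 1) * m) \<and> 1 \<le> K"
    have "real K * qc (real n) / (real n + (real K - 1) * m) \<le> HKv K"
      using h c by (intro HKv_lower) auto
    then show "u < HKv K" using h by linarith
  qed
next
  fix u assume u: "q / m < u"
  define d where "d n = inverse (real (Suc n))" for n :: nat
  have d0: "d \<longlonglongrightarrow> 0" unfolding d_def by (rule LIMSEQ_inverse_real_of_nat)
  have l1: "(\<lambda>n. mc (real n) - d n) \<longlonglongrightarrow> m - 0" by (intro tendsto_diff mc_lim d0)
  have l2: "(\<lambda>n. q / (mc (real n) - d n)) \<longlonglongrightarrow> q / (m - 0)"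
    using m_pos by (intro tendsto_divide tendsto_const l1) auto
  have ev1: "\<forall>\<^sub>F n in sequentially. 0 < mc (real n) - d n"
    using order_tendstoD(1)[OF l1, of 0] m_pos by simp
  have ev2: "\<forall>\<^sub>F n in sequentially. q / (mc (real n) - d n) < u"
    using order_tendstoD(2)[OF l2, of u] u by simp
  from eventually_conj[OF eventually_conj[OF ev1 ev2] eventually_ge_at_top[of "1::nat"]]
  have "\<exists>n. (0 < mc (real n) - d n \<and> q / (mc (real n) - d n) < u) \<and> 1 \<le> n"
    unfolding eventually_sequentially by (meson order_refl)
  then obtain n where n: "0 < mc (real n) - d n" "q / (mc (real n) - d n) < u" "1 \<le> n"
    by blast
  define c where "c = real n"
  define mp where "mp = mc c - d n"
  define b where "b = d n ^ 2 / (4 * c^2)"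
  have c: "0 < c" using n by (simp add: c_def)
  have dn: "0 < d n" by (simp add: d_def)
  have mp: "0 < mp" using n by (simp add: mp_def c_def)
  have b: "0 < b" using c dn by (simp add: b_def)
  have "(\<lambda>K. real K * q / (0 + (real K - 1) * mp) + real K * exp (-(real K - 1) * b)) \<longlonglongrightarrow> q / mp + 0"
    by (intro tendsto_add lim_ratio[OF mp] lim_kexp[OF b])
  from order_tendstoD(2)[OF this] have ev: "\<forall>\<^sub>F K in sequentially. real K * q / (0 + (real K - 1) * mp) + real K * exp (-(real K - 1) * b) < u"
    using n(2) by (simp add: mp_def c_def)
  show "\<forall>\<^sub>F K in sequentially. HKv K < u"
    using eventually_conj[OF ev eventually_ge_at_top[of "2::nat"]]
  proof (rule eventually_mono)
    fix K :: nat assume h: "real K * q / (0 + (real K - 1) * mp) + real K * exp (-(real K - 1) * b) < u \<and> 2 \<le> K"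
    have "HKv K \<le> real K * q / ((real K - 1) * (mc c - d n)) + real K * exp (-(real K - 1) * (d n^2 / (4 * c^2)))"
      using h mp unfolding mp_def by (intro HKv_upper c dn) auto
    then show "HKv K < u" using h by (simp add: mp_def b_def)
  qed
qed

end

lemma fin_real: "(x::ennreal) < \<infinity> \<Longrightarrow> \<exists>r\<ge>0. x = ennreal r"
  by (cases x rule: ennreal_cases) auto

lemma ennreal_plus4: "0 \<le> a \<Longrightarrow> 0 \<le> b \<Longrightarrow> 0 \<le> c \<Longrightarrow> 0 \<le> d \<Longrightarrow>
  ennreal a + ennreal b + ennreal c + ennreal d = ennreal (a + b + c + d)"
  by simp
lemma ennreal_plus3: "0 \<le> a \<Longrightarrow> 0 \<le> b \<Longrightarrow> 0 \<le> c \<Longrightarrow>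
  ennreal a + ennreal b + ennreal c = ennreal (a + b + c)"
  by simp

lemma gibbs:
  fixes M :: "'a measure" and q :: "'a \<Rightarrow> real"
  assumes qd: "q \<in> dens M" and ent: "(\<integral>\<^sup>+x. ennreal (q x * \<bar>ln (q x)\<bar>) \<partial>M) < \<infinity>"
  shows "unique_maximizer M (\<lambda>p. obj M q p) q"
proof -
  have qm[measurable]: "q \<in> borel_measurable M" and q0: "\<And>x. x \<in> space M \<Longrightarrow> 0 \<le> q x"
    and q1: "(\<integral>\<^sup>+x. ennreal (q x) \<partial>M) = 1" using qd by (auto simp: dens_def)
  define A where "A p x = (if p x \<le> 0 then 0 else ennreal (q x * max 0 (ln (p x))))" for p :: "'a \<Rightarrow> real" and x
  define B where "B p x = (if q x = 0 then 0 else if p x \<le> 0 then \<infinity> else ennreal (q x * max 0 (- ln (p x))))" for p :: "'a \<Rightarrow> real" and x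
  define Dd where "Dd p x = (if q x = 0 then ennreal (p x) else if p x \<le> 0 then \<infinity>
      else ennreal (q x * ln (q x) - q x * ln (p x) + p x - q x))" for p :: "'a \<Rightarrow> real" and x
  have obj_eq: "obj M q p = enn2ereal (integral\<^sup>N M (A p)) - enn2ereal (integral\<^sup>N M (B p))" for p
    unfolding obj_def A_def B_def ..
  have Am: "A p \<in> borel_measurable M" if [measurable]: "p \<in> borel_measurable M" for p
    unfolding A_def by measurable
  have Bm: "B p \<in> borel_measurable M" if [measurable]: "p \<in> borel_measurable M" for p
    unfolding B_def by measurable
  have Dm: "Dd p \<in> borel_measurable M" if [measurable]: "p \<in> borel_measurable M" for p
    unfolding Dd_def by measurable
  have Aq_fin: "integral\<^sup>N M (A q) < \<infinity>"
  proof -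
    have "integral\<^sup>N M (A q) \<le> (\<integral>\<^sup>+x. ennreal (q x * \<bar>ln (q x)\<bar>) \<partial>M)"
    proof (rule nn_integral_mono)
      fix x assume x: "x \<in> space M"
      show "A q x \<le> ennreal (q x * \<bar>ln (q x)\<bar>)"
        using q0[OF x] unfolding A_def by (auto intro!: ennreal_leI mult_left_mono)
    qed
    then show ?thesis using ent by (meson le_less_trans)
  qed
  have Bq_fin: "integral\<^sup>N M (B q) < \<infinity>"
  proof -
    have "integral\<^sup>N M (B q) \<le> (\<integral>\<^sup>+x. ennreal (q x * \<bar>ln (q x)\<bar>) \<partial>M)"
    proof (rule nn_integral_mono)
      fix x assume x: "x \<in> space M"
      show "B q x \<le> ennreal (q x * \<bar>ln (q x)\<bar>)"
        using q0[OF x] unfolding B_def by (auto intro!: ennreal_leI mult_left_mono)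
    qed
    then show ?thesis using ent by (meson le_less_trans)
  qed
  have Ap_fin: "integral\<^sup>N M (A p) < \<infinity>" if pd: "p \<in> dens M" for p
  proof -
    have pm[measurable]: "p \<in> borel_measurable M" and p0: "\<And>x. x \<in> space M \<Longrightarrow> 0 \<le> p x"
      and p1: "(\<integral>\<^sup>+x. ennreal (p x) \<partial>M) = 1" using pd by (auto simp: dens_def)
    have "integral\<^sup>N M (A p) \<le> (\<integral>\<^sup>+x. A q x + ennreal (p x) \<partial>M)"
    proof (rule nn_integral_mono)
      fix x assume x: "x \<in> space M"
      show "A p x \<le> A q x + ennreal (p x)"
      proof (cases "p x \<le> 0 \<or> q x = 0")
        case True
        then show ?thesis unfolding A_def by auto
      next
        case False
        then have pp: "0 < p x" and qp: "0 < q x" using q0[OF x] by auto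
        have "ennreal (q x * max 0 (ln (p x))) \<le> ennreal (q x * max 0 (ln (q x)) + p x)"
          by (rule ennreal_leI[OF gibbs_R1[OF qp pp]])
        also have "\<dots> = ennreal (q x * max 0 (ln (q x))) + ennreal (p x)"
          using qp pp by (intro ennreal_plus) auto
        finally show ?thesis unfolding A_def using pp qp by auto
      qed
    qed
    also have "\<dots> = integral\<^sup>N M (A q) + 1" using p1 Am[OF qm] by (simp add: nn_integral_add)
    also have "\<dots> < \<infinity>" using Aq_fin by (simp add: less_top)
    finally show ?thesis .
  qed
  have key: "integral\<^sup>N M (A p) + integral\<^sup>N M (B q) + 1 + integral\<^sup>N M (Dd p) = integral\<^sup>N M (A q) + integral\<^sup>N M (B p) + 1"
    if pd: "p \<in> dens M" for p
  proof -
    have pm[measurable]: "p \<in> borel_measurable M" and p0: "\<And>x. x \<in> space M \<Longrightarrow> 0 \<le> p x"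
      and p1: "(\<integral>\<^sup>+x. ennreal (p x) \<partial>M) = 1" using pd by (auto simp: dens_def)
    have pt: "A p x + B q x + ennreal (q x) + Dd p x = A q x + B p x + ennreal (p x)" if x: "x \<in> space M" for x
    proof (cases "q x = 0")
      case True
      then show ?thesis unfolding A_def B_def Dd_def by simp
    next
      case qn: False
      then have qp: "0 < q x" using q0[OF x] by auto
      show ?thesis
      proof (cases "p x \<le> 0")
        case True
        then show ?thesis using qn unfolding A_def B_def Dd_def by simp
      next
        case False
        then have pp: "0 < p x" by simp
        have n: "0 \<le> q x * max 0 (ln (p x))" "0 \<le> q x * max 0 (- ln (q x))" "0 \<le> q x"
          "0 \<le> q x * ln (q x) - q x * ln (p x) + p x - q x"
          "0 \<le> q x * max 0 (ln (q x))" "0 \<le> q x * max 0 (- ln (p x))" "0 \<le> p x"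
          using qp pp gibbs_R2(1)[OF qp pp] by auto
        have "A p x + B q x + ennreal (q x) + Dd p x
          = ennreal (q x * max 0 (ln (p x))) + ennreal (q x * max 0 (- ln (q x))) + ennreal (q x)
            + ennreal (q x * ln (q x) - q x * ln (p x) + p x - q x)"
          unfolding A_def B_def Dd_def using qp pp by simp
        also have "\<dots> = ennreal (q x * max 0 (ln (p x)) + q x * max 0 (- ln (q x)) + q x
            + (q x * ln (q x) - q x * ln (p x) + p x - q x))"
          using n by (intro ennreal_plus4)
        also have "\<dots> = ennreal (q x * max 0 (ln (q x)) + q x * max 0 (- ln (p x)) + p x)"
          by (simp only: gibbs_R3)
        also have "\<dots> = ennreal (q x * max 0 (ln (q x))) + ennreal (q x * max 0 (- ln (p x))) + ennreal (p x)"
          using n by (intro ennreal_plus3[symmetric])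
        also have "\<dots> = A q x + B p x + ennreal (p x)"
          unfolding A_def B_def using qp pp by simp
        finally show ?thesis .
      qed
    qed
    have "integral\<^sup>N M (A p) + integral\<^sup>N M (B q) + 1 + integral\<^sup>N M (Dd p)
        = (\<integral>\<^sup>+x. A p x + B q x + ennreal (q x) + Dd p x \<partial>M)"
      using Am[OF pm] Bm[OF qm] Dm[OF pm] q1 by (simp add: nn_integral_add)
    also have "\<dots> = (\<integral>\<^sup>+x. A q x + B p x + ennreal (p x) \<partial>M)"
      by (rule nn_integral_cong) (rule pt)
    also have "\<dots> = integral\<^sup>N M (A q) + integral\<^sup>N M (B p) + 1"
      using Am[OF qm] Bm[OF pm] p1 by (simp add: nn_integral_add)
    finally show ?thesis .
  qed
  obtain aq where aq: "integral\<^sup>N M (A q) = ennreal aq" "0 \<le> aq" using fin_real[OF Aq_fin] by blast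
  obtain bq where bq: "integral\<^sup>N M (B q) = ennreal bq" "0 \<le> bq" using fin_real[OF Bq_fin] by blast
  have objq: "obj M q q = ereal (aq - bq)" unfolding obj_eq aq bq using aq bq by simp
  have main: "obj M q p \<le> obj M q q \<and> (obj M q p = obj M q q \<longrightarrow> (AE x in M. p x = q x))"
    if pd: "p \<in> dens M" for p
  proof -
    have pm[measurable]: "p \<in> borel_measurable M" and p0: "\<And>x. x \<in> space M \<Longrightarrow> 0 \<le> p x"
      using pd by (auto simp: dens_def)
    obtain ap where ap: "integral\<^sup>N M (A p) = ennreal ap" "0 \<le> ap" using fin_real[OF Ap_fin[OF pd]] by blast
    show ?thesis
    proof (cases "integral\<^sup>N M (B p) = \<infinity>")
      case True
      then have "obj M q p = - \<infinity>" unfolding obj_eq ap using ap(2) by (simp add: enn2ereal_ennreal)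
      then show ?thesis unfolding objq by simp
    next
      case False
      then obtain bp where bp: "integral\<^sup>N M (B p) = ennreal bp" "0 \<le> bp" using fin_real[of "integral\<^sup>N M (B p)"]
        by (auto simp: less_top)
      have k: "ennreal ap + ennreal bq + 1 + integral\<^sup>N M (Dd p) = ennreal aq + ennreal bp + 1"
        using key[OF pd] unfolding ap aq bp bq .
      have "integral\<^sup>N M (Dd p) \<le> ennreal ap + ennreal bq + 1 + integral\<^sup>N M (Dd p)"
        by (rule add_increasing) auto
      also have "\<dots> < \<infinity>" unfolding k by simp
      finally obtain dp where dp: "integral\<^sup>N M (Dd p) = ennreal dp" "0 \<le> dp" using fin_real by blast
      have e1: "ennreal (ap + bq + 1 + dp) = ennreal ap + ennreal bq + ennreal 1 + ennreal dp"
        by (rule ennreal_plus4[symmetric]) (use ap bq dp in auto)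
      have e2: "ennreal (aq + bp + 1) = ennreal aq + ennreal bp + ennreal 1"
        by (rule ennreal_plus3[symmetric]) (use aq bp in auto)
      have "ennreal (ap + bq + 1 + dp) = ennreal (aq + bp + 1)"
        using k unfolding dp e1 e2 ennreal_1 .
      then have eq: "ap + bq + 1 + dp = aq + bp + 1" using ap bq dp bp aq by (subst (asm) ennreal_inj) auto
      have objp: "obj M q p = ereal (ap - bp)" unfolding obj_eq ap bp using ap bp by simp
      show ?thesis
      proof
        show "obj M q p \<le> obj M q q" unfolding objp objq using eq dp by simp
        show "obj M q p = obj M q q \<longrightarrow> (AE x in M. p x = q x)"
        proof
          assume "obj M q p = obj M q q"
          then have "dp = 0" unfolding objp objq using eq by simp
          then have "integral\<^sup>N M (Dd p) = 0" using dp by simp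
          then have "AE x in M. Dd p x = 0" using Dm[OF pm] by (simp add: nn_integral_0_iff_AE)
          then show "AE x in M. p x = q x"
          proof (rule AE_mp, intro AE_I2 impI)
            fix x assume x: "x \<in> space M" and D0: "Dd p x = 0"
            show "p x = q x"
            proof (cases "q x = 0")
              case True
              then have "ennreal (p x) = 0" using D0 by (simp add: Dd_def)
              then show ?thesis using True p0[OF x] by (simp add: ennreal_eq_0_iff)
            next
              case qn: False
              then have qp: "0 < q x" using q0[OF x] by auto
              show ?thesis
              proof (cases "p x \<le> 0")
                case True
                then show ?thesis using D0 qn by (simp add: Dd_def)
              next
                case False
                then have pp: "0 < p x" by simp
                have "ennreal (q x * ln (q x) - q x * ln (p x) + p x - q x) = 0"
                  using D0 qn False by (simp add: Dd_def)
                then have "q x * ln (q x) - q x * ln (p x) + p x - q x \<le> 0" by (simp add: ennreal_eq_0_iff)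
                then have "q x * ln (q x) - q x * ln (p x) + p x - q x = 0" using gibbs_R2(1)[OF qp pp] by simp
                then show ?thesis by (rule gibbs_R2(2)[OF qp pp])
              qed
            qed
          qed
        qed
      qed
    qed
  qed
  show ?thesis unfolding unique_maximizer_def using qd main by blast
qed

locale stp =
  fixes M :: "'a measure" and N :: "'w measure" and r :: "'a \<Rightarrow> real" and eps :: "'w \<Rightarrow> 'a \<Rightarrow> real" and Qs :: real
  assumes N_prob: "prob_space N"
    and r_meas[measurable]: "r \<in> borel_measurable M"
    and eps_meas[measurable]: "(\<lambda>(w, x). eps w x) \<in> borel_measurable (N \<Otimes>\<^sub>M M)"
    and Qs_bound: "\<And>x. x \<in> space M \<Longrightarrow> Qf N r eps x \<le> ennreal Qs"
    and Qs_pos: "0 < Qs"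
begin

lemma eps_swap[measurable]: "(\<lambda>(x, w). eps w x) \<in> borel_measurable (M \<Otimes>\<^sub>M N)"
  using eps_meas by (subst measurable_pair_swap_iff) simp

lemma Qf_meas[measurable]: "(\<lambda>x. Qf N r eps x) \<in> borel_measurable M"
proof -
  interpret sN: sigma_finite_measure N using N_prob by (rule prob_space_imp_sigma_finite)
  show ?thesis unfolding Qf_def by measurable
qed

lemma eps_x[measurable]: "x \<in> space M \<Longrightarrow> (\<lambda>w. eps w x) \<in> borel_measurable N"
proof -
  assume x: "x \<in> space M"
  have "(\<lambda>w. (\<lambda>(x, w). eps w x) (x, w)) \<in> borel_measurable N" by (rule measurable_compose_Pair1[OF x eps_swap])
  then show ?thesis by simp
qed

lemma Qf_exp: "x \<in> space M \<Longrightarrow> (\<integral>\<^sup>+w. ennreal (exp (r x + eps w x)) \<partial>N) = Qf N r eps x"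
  unfolding Qf_def by (subst nn_integral_cmult[symmetric]) (auto simp: exp_add ennreal_mult)


lemma Qf_pos: "x \<in> space M \<Longrightarrow> 0 < Qf N r eps x"
  by (subst Qf_exp[symmetric]) (auto intro!: nn_integral_pos_prob[OF N_prob])

lemma Qf_fin: "x \<in> space M \<Longrightarrow> Qf N r eps x < \<infinity>"
proof -
  assume x: "x \<in> space M"
  have "Qf N r eps x \<le> ennreal Qs" by (rule Qs_bound[OF x])
  also have "\<dots> < \<infinity>" by simp
  finally show ?thesis .
qed

definition "EQp p = (\<integral>\<^sup>+x. ennreal (p x) * Qf N r eps x \<partial>M)"

lemma EQ_bound:
  assumes pd: "p \<in> dens M"
  shows "0 < EQp p" "EQp p \<le> ennreal Qs"
proof -
  have pm[measurable]: "p \<in> borel_measurable M" and p0: "\<And>x. x \<in> space M \<Longrightarrow> 0 \<le> p x"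
    and p1: "(\<integral>\<^sup>+x. ennreal (p x) \<partial>M) = 1" using pd by (auto simp: dens_def)
  have "EQp p \<le> (\<integral>\<^sup>+x. ennreal (p x) * ennreal Qs \<partial>M)"
    unfolding EQp_def by (intro nn_integral_mono mult_left_mono Qs_bound) auto
  also have "\<dots> = ennreal Qs" using p1 by (simp add: nn_integral_multc)
  finally show "EQp p \<le> ennreal Qs" .
  show "0 < EQp p"
  proof (rule ccontr)
    assume "\<not> 0 < EQp p"
    then have "EQp p = 0" by (simp add: zero_less_iff_neq_zero)
    then have "AE x in M. ennreal (p x) * Qf N r eps x = 0" unfolding EQp_def
      by (subst (asm) nn_integral_0_iff_AE) auto
    then have "AE x in M. ennreal (p x) = 0"
      by (rule AE_mp) (auto intro!: AE_I2 dest: Qf_pos)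
    then have "(\<integral>\<^sup>+x. ennreal (p x) \<partial>M) = 0" by (simp add: nn_integral_0_iff_AE)
    then show False using p1 by simp
  qed
qed

lemma dens_prob: "p \<in> dens M \<Longrightarrow> prob_space (density M p)"
  by (rule prob_spaceI) (auto simp: dens_def emeasure_density)

lemma Hinf_eq:
  assumes pd: "p \<in> dens M" and x: "x \<in> space M"
  shows "Hinf M N r eps p x = enn2real (Qf N r eps x) / enn2real (EQp p)"
proof -
  have pm[measurable]: "p \<in> borel_measurable M" using pd by (auto simp: dens_def)
  interpret sN: sigma_finite_measure N using N_prob by (rule prob_space_imp_sigma_finite)
  have Dp: "prob_space (density M p)" by (rule dens_prob[OF pd])
  interpret sD: sigma_finite_measure "density M p" using Dp by (rule prob_space_imp_sigma_finite)
  interpret pND: pair_sigma_finite N "density M p" by unfold_locales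
  have YmM: "(\<lambda>(w, x'). exp (r x' + eps w x')) \<in> borel_measurable (N \<Otimes>\<^sub>M M)" by measurable
  have Ym: "(\<lambda>(w, x'). exp (r x' + eps w x')) \<in> borel_measurable (N \<Otimes>\<^sub>M density M p)"
    using YmM by (subst measurable_cong_sets[OF sets_pair_measure_cong[OF refl sets_density] refl])
  have Ym': "(\<lambda>(w, x'). ennreal (exp (r x' + eps w x'))) \<in> borel_measurable (N \<Otimes>\<^sub>M density M p)"
    using Ym by measurable
  have mfin_eq: "(\<integral>\<^sup>+w. \<integral>\<^sup>+x'. ennreal (exp (r x' + eps w x')) \<partial>density M p \<partial>N) = EQp p"
  proof -
    have "(\<integral>\<^sup>+w. \<integral>\<^sup>+x'. ennreal (exp (r x' + eps w x')) \<partial>density M p \<partial>N)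
        = (\<integral>\<^sup>+x'. \<integral>\<^sup>+w. ennreal (exp (r x' + eps w x')) \<partial>N \<partial>density M p)"
      by (rule pND.Fubini'[symmetric]) (use Ym' in simp)
    also have "\<dots> = (\<integral>\<^sup>+x'. ennreal (p x') * (\<integral>\<^sup>+w. ennreal (exp (r x' + eps w x')) \<partial>N) \<partial>M)"
      by (rule nn_integral_density) measurable
    also have "\<dots> = EQp p" unfolding EQp_def
      by (rule nn_integral_cong) (simp add: Qf_exp)
    finally show ?thesis .
  qed
  interpret H: hks N "density M p" "\<lambda>w x'. exp (r x' + eps w x')" "\<lambda>w. exp (r x + eps w x)"
  proof (rule hks.intro)
    show "prob_space N" by (rule N_prob)
    show "prob_space (density M p)" by (rule Dp)
    show "(\<lambda>(w, x'). exp (r x' + eps w x')) \<in> borel_measurable (N \<Otimes>\<^sub>M density M p)" by (rule Ym)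
    show "(\<lambda>w. exp (r x + eps w x)) \<in> borel_measurable N" using x by measurable
    show "(\<integral>\<^sup>+w. \<integral>\<^sup>+x'. ennreal (exp (r x' + eps w x')) \<partial>density M p \<partial>N) < \<infinity>"
      unfolding mfin_eq infinity_ennreal_def using EQ_bound(2)[OF pd] ennreal_less_top[of Qs] by (rule le_less_trans)
    show "(\<integral>\<^sup>+w. ennreal (exp (r x + eps w x)) \<partial>N) < \<infinity>"
      using Qf_exp[OF x] Qf_fin[OF x] by simp
  qed auto
  have HK_eq: "HK M N r eps K p x = H.HKv K" if K: "1 \<le> K" for K
  proof -
    have "HK M N r eps K p x = integral\<^sup>L (H.P K) (H.F K)"
      unfolding HK_def H.P_def H.F_def H.S_def by (simp add: case_prod_beta')
    also have "\<dots> = H.HKv K" unfolding H.HKv_def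
      by (rule integral_eq_nn_integral[OF H.meas_F[OF K]]) (auto intro!: AE_I2 H.F_nonneg[OF K])
    finally show ?thesis .
  qed
  have "(\<lambda>K. HK M N r eps K p x) \<longlonglongrightarrow> H.q / H.m"
  proof (rule Lim_transform_eventually[OF H.HK_lim])
    show "\<forall>\<^sub>F K in sequentially. H.HKv K = HK M N r eps K p x"
      using eventually_ge_at_top[of "1::nat"] by (rule eventually_mono) (simp add: HK_eq)
  qed
  then have "Hinf M N r eps p x = H.q / H.m" unfolding Hinf_def by (rule limI)
  also have "H.q = enn2real (Qf N r eps x)" unfolding H.q_def using Qf_exp[OF x] by simp
  also have "H.m = enn2real (EQp p)" unfolding H.m_def using mfin_eq by simp
  finally show ?thesis .
qed

definition "Inv p \<longleftrightarrow> p \<in> dens M \<and> (\<integral>\<^sup>+x. ennreal (p x * \<bar>ln (p x)\<bar>) \<partial>M) < \<infinity>"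

lemma step:
  assumes I: "Inv p"
  shows "Inv (\<lambda>x. p x * Hinf M N r eps p x)"
proof -
  have pd: "p \<in> dens M" and ent: "(\<integral>\<^sup>+x. ennreal (p x * \<bar>ln (p x)\<bar>) \<partial>M) < \<infinity>" using I by (auto simp: Inv_def)
  have pm[measurable]: "p \<in> borel_measurable M" and p0: "\<And>x. x \<in> space M \<Longrightarrow> 0 \<le> p x"
    and p1: "(\<integral>\<^sup>+x. ennreal (p x) \<partial>M) = 1" using pd by (auto simp: dens_def)
  define c where "c = enn2real (EQp p)"
  have EQfin: "EQp p < \<infinity>" unfolding infinity_ennreal_def
    using EQ_bound(2)[OF pd] ennreal_less_top[of Qs] by (rule le_less_trans)
  have EQc: "EQp p = ennreal c" unfolding c_def using EQfin by simp
  have c: "0 < c" using EQ_bound(1)[OF pd] unfolding EQc by (simp add: ennreal_less_iff)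
  define T where "T x = p x * enn2real (Qf N r eps x) / c" for x
  have Teq: "p x * Hinf M N r eps p x = T x" if x: "x \<in> space M" for x
    unfolding T_def Hinf_eq[OF pd x] c_def by simp
  have Tm[measurable]: "T \<in> borel_measurable M" unfolding T_def by measurable
  have Qr: "0 < enn2real (Qf N r eps x)" "enn2real (Qf N r eps x) \<le> Qs" "Qf N r eps x = ennreal (enn2real (Qf N r eps x))"
    if x: "x \<in> space M" for x
  proof -
    show e: "Qf N r eps x = ennreal (enn2real (Qf N r eps x))" using Qf_fin[OF x] by simp
    show "0 < enn2real (Qf N r eps x)" using Qf_pos[OF x] Qf_fin[OF x]
      by (simp add: enn2real_positive_iff)
    have "Qs \<ge> 0" using Qs_pos by simp
    then show "enn2real (Qf N r eps x) \<le> Qs" using Qs_bound[OF x] by (simp add: enn2real_leI)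
  qed
  have T0: "0 \<le> T x" if x: "x \<in> space M" for x
    unfolding T_def using p0[OF x] Qr(1)[OF x] c by simp
  have Tint: "(\<integral>\<^sup>+x. ennreal (T x) \<partial>M) = 1"
  proof -
    have "(\<integral>\<^sup>+x. ennreal (T x) \<partial>M) = (\<integral>\<^sup>+x. ennreal (p x) * Qf N r eps x * ennreal (1 / c) \<partial>M)"
    proof (rule nn_integral_cong)
      fix x assume x: "x \<in> space M"
      have "T x = p x * enn2real (Qf N r eps x) * (1 / c)" by (simp add: T_def)
      moreover have "ennreal (p x * enn2real (Qf N r eps x) * (1 / c)) = ennreal (p x) * ennreal (enn2real (Qf N r eps x)) * ennreal (1 / c)"
        using p0[OF x] Qr(1)[OF x] c by (simp only: ennreal_mult mult_nonneg_nonneg less_imp_le divide_nonneg_pos zero_less_one)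
      ultimately have "ennreal (T x) = ennreal (p x) * ennreal (enn2real (Qf N r eps x)) * ennreal (1 / c)"
        by simp
      then show "ennreal (T x) = ennreal (p x) * Qf N r eps x * ennreal (1 / c)" using Qr(3)[OF x] by simp
    qed
    also have "\<dots> = EQp p * ennreal (1 / c)" unfolding EQp_def by (rule nn_integral_multc) measurable
    also have "\<dots> = ennreal (c * (1 / c))" unfolding EQc using c by (subst ennreal_mult) auto
    also have "\<dots> = 1" using c by simp
    finally show ?thesis .
  qed
  have Td: "(\<lambda>x. p x * Hinf M N r eps p x) \<in> dens M"
    unfolding dens_def
  proof (intro CollectI conjI ballI)
    show "(\<lambda>x. p x * Hinf M N r eps p x) \<in> borel_measurable M"
      by (rule measurable_cong[THEN iffD2, OF _ Tm]) (simp add: Teq)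
    show "0 \<le> p x * Hinf M N r eps p x" if "x \<in> space M" for x using Teq[OF that] T0[OF that] by simp
    show "(\<integral>\<^sup>+x. ennreal (p x * Hinf M N r eps p x) \<partial>M) = 1"
      using Tint by (subst nn_integral_cong[OF arg_cong[where f=ennreal, OF Teq]]) auto
  qed
  define K1 where "K1 = Qs / c"
  define K2 where "K2 = ((1 + Qs^2) + Qs * \<bar>ln c\<bar>) / c"
  have K: "0 \<le> K1" "0 \<le> K2" using c Qs_pos unfolding K1_def K2_def by auto
  have "(\<integral>\<^sup>+x. ennreal (p x * Hinf M N r eps p x * \<bar>ln (p x * Hinf M N r eps p x)\<bar>) \<partial>M)
      \<le> (\<integral>\<^sup>+x. ennreal K1 * ennreal (p x * \<bar>ln (p x)\<bar>) + ennreal K2 * ennreal (p x) \<partial>M)"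
  proof (rule nn_integral_mono)
    fix x assume x: "x \<in> space M"
    have "p x * Hinf M N r eps p x * \<bar>ln (p x * Hinf M N r eps p x)\<bar> \<le> K1 * (p x * \<bar>ln (p x)\<bar>) + K2 * p x"
      unfolding Teq[OF x] T_def K1_def K2_def by (rule ent_step[OF p0[OF x] Qr(1,2)[OF x] c])
    then show "ennreal (p x * Hinf M N r eps p x * \<bar>ln (p x * Hinf M N r eps p x)\<bar>) \<le> ennreal K1 * ennreal (p x * \<bar>ln (p x)\<bar>) + ennreal K2 * ennreal (p x)"
      using K p0[OF x] by (simp add: ennreal_mult[symmetric] ennreal_plus[symmetric] ennreal_leI del: ennreal_plus)
  qed
  also have "\<dots> = ennreal K1 * (\<integral>\<^sup>+x. ennreal (p x * \<bar>ln (p x)\<bar>) \<partial>M) + ennreal K2 * 1"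
    using p1 by (simp add: nn_integral_add nn_integral_cmult)
  also have "\<dots> < \<infinity>" using ent by (simp add: ennreal_mult_less_top)
  finally show ?thesis using Td unfolding Inv_def by blast
qed
end

theorem theorem2:
  fixes M :: "'a measure" and N :: "'w measure" and r :: "'a \<Rightarrow> real"
    and eps :: "'w \<Rightarrow> 'a \<Rightarrow> real" and p0 pref :: "'a \<Rightarrow> real"
  assumes sf: "sigma_finite_measure M"
    and r_meas: "r \<in> borel_measurable M"
    and N_prob: "prob_space N"
    and eps_meas: "(\<lambda>(w, x). eps w x) \<in> borel_measurable (N \<Otimes>\<^sub>M M)"
    and a_p0: "p0 \<in> dens M" "(\<integral>\<^sup>+x. ennreal (p0 x * \<bar>ln (p0 x)\<bar>) \<partial>M) < \<infinity>"
    and a_pref: "pref \<in> dens M" "(\<integral>\<^sup>+x. ennreal (pref x * \<bar>ln (pref x)\<bar>) \<partial>M) < \<infinity>"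
    and b: "\<forall>p\<in>dens M. (\<integral>\<^sup>+x. (\<integral>\<^sup>+w. ennreal (exp \<bar>r x + eps w x\<bar>) \<partial>N) \<partial>(density M p)) < \<infinity>"
    and c: "0 < esssup M (\<lambda>x. enn2ereal (Qf N r eps x))"
           "esssup M (\<lambda>x. enn2ereal (Qf N r eps x)) < \<infinity>"
           "\<forall>x\<in>space M. enn2ereal (Qf N r eps x) \<le> esssup M (\<lambda>x. enn2ereal (Qf N r eps x))"
  shows "\<forall>t. unique_maximizer M
               (\<lambda>p. obj M (\<lambda>x. iter M N r eps p0 t x * Hinf M N r eps (iter M N r eps p0 t) x) p)
               (\<lambda>x. iter M N r eps p0 t x * Hinf M N r eps (iter M N r eps p0 t) x)"
proof -
  define E where "E = esssup M (\<lambda>x. enn2ereal (Qf N r eps x))"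
  define Qs where "Qs = real_of_ereal E"
  have EQs: "E = ereal Qs" using c(1,2) unfolding E_def Qs_def
    by (cases "esssup M (\<lambda>x. enn2ereal (Qf N r eps x))") auto
  have Qs_pos: "0 < Qs" using c(1) EQs unfolding E_def by simp
  have Qb: "Qf N r eps x \<le> ennreal Qs" if x: "x \<in> space M" for x
  proof -
    have "enn2ereal (Qf N r eps x) \<le> enn2ereal (ennreal Qs)"
      using c(3) x EQs Qs_pos unfolding E_def by (simp add: enn2ereal_ennreal)
    then show ?thesis by (simp add: less_eq_ennreal.rep_eq)
  qed
  interpret S: stp M N r eps Qs
    by (rule stp.intro) (use N_prob r_meas eps_meas Qb Qs_pos in auto)
  have inv: "S.Inv (iter M N r eps p0 t)" for t
  proof (induction t)
    case 0
    then show ?case using a_p0 by (simp add: S.Inv_def)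
  next
    case (Suc t)
    then show ?case using S.step[OF Suc] by simp
  qed
  show ?thesis
  proof
    fix t
    have "S.Inv (iter M N r eps p0 (Suc t))" by (rule inv)
    then have "unique_maximizer M (\<lambda>p. obj M (iter M N r eps p0 (Suc t)) p) (iter M N r eps p0 (Suc t))"
      unfolding S.Inv_def by (intro gibbs) auto
    then show "unique_maximizer M
               (\<lambda>p. obj M (\<lambda>x. iter M N r eps p0 t x * Hinf M N r eps (iter M N r eps p0 t) x) p)
               (\<lambda>x. iter M N r eps p0 t x * Hinf M N r eps (iter M N r eps p0 t) x)" by simp
  qed
qed

end
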